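(* Let $(\Omega,\Sigma,\mu)$ be a measure space, $X(\mu)$ a $\sigma$-order continuous quasi-Banach function space with the $\sigma$-property, $E$ a Banach space and $T\colon X(\mu)\to E$ a continuous linear operator. Then $[i]\colon X(\mu)\to L^1(m_T)$ is well defined, $T=I_{m_T}\circ[i]$, and $I_{m_T}\colon L^1(m_T)\to E$ is continuous. Moreover the factorization is optimal: if $\xi$ is a measure on $\Sigma$ with $\xi\ll\mu$, $Z(\xi)$ is a $\sigma$-order continuous quasi-Banach function space such that $[i]\colon X(\mu)\to Z(\xi)$ is well defined, and $S\colon Z(\xi)\to E$ is a continuous linear operator with $T=S\circ[i]$, then $[i]\colon Z(\xi)\to L^1(m_T)$ is well defined and $S=I_{m_T}\circ[i]$.
   Context: $L^0(\lambda)$: $\lambda$-a.e. classes of $\Sigma$-measurable real functions. An ideal function space $Y(\lambda)\subset L^0(\lambda)$ is a vector subspace with $f\in Y(\lambda)$, $|g|\le|f|$ a.e. $\Rightarrow g\in Y(\lambda)$. A quasi-norm satisfies $\|x\|=0\iff x=0$, $\|\alpha x\|=|\alpha|\|x\|$, $\|x+y\|\le K(\|x\|+\|y\|)$ for some $K\ge1$. A quasi-Banach function space is an ideal function space complete under a quasi-norm with $|f|\le|g|$ a.e. $\Rightarrow\|f\|\le\|g\|$; it is $\sigma$-order continuous if $f_n\downarrow0$ a.e. implies $\|f_n\|\downarrow0$. $\sigma$-property: $\Omega=\bigcup_n\Omega_n$, $\Omega_n\in\Sigma$, $\chi_{\Omega_n}\in X(\mu)$. For $\xi\ll\lambda$,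 $[i]$ maps the $\lambda$-class of $f$ to its $\xi$-class; "$[i]\colon Y(\lambda)\to W(\xi)$ is well defined" means $\xi\ll\lambda$ and the $\xi$-class of each $f\in Y(\lambda)$ lies in $W(\xi)$. $\Sigma_{X(\mu)}=\{A\in\Sigma:\chi_A\in X(\mu)\}$ ($\delta$-ring with local $\sigma$-algebra $\Sigma$), $m_T(A)=T(\chi_A)$ for $A\in\Sigma_{X(\mu)}$ (a vector measure under the hypotheses). For a vector measure $m$ on $\Sigma_{X(\mu)}$: $|x^*m|$ the variation of $x^*\circ m$ on $\Sigma$, $\|m\|=\sup_{x^*\in B_{E^*}}|x^*m|$, $L^0(m)$ = $\Sigma$-measurable functions modulo $\|m\|$-null sets; $L^1(m)$ = those $f\in L^0(m)$ with $f\in L^1(|x^*m|)$ for all $x^*$ and, for each $A\in\Sigma$, some $\int_Af\,dm\in E$ with $x^*(\int_Af\,dm)=\int_Af\,dx^*m$ for all $x^*$, normed by $\sup_{x^*\in B_{E^*}}\int|f|\,d|x^*m|$; $I_m(f)=\int_\Omega f\,dm$. *)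

theory Defs
  imports "HOL-Analysis.Analysis"
begin

text \<open>Function spaces are represented by sets of real functions that are closed under
  a.e. equality (this follows from the ideal property); a quasi-norm is a function on them
  which is invariant under a.e. equality (this follows from monotonicity).\<close>

definition ideal_fs :: "'a measure \<Rightarrow> ('a \<Rightarrow> real) set \<Rightarrow> bool" where
  "ideal_fs M Y \<longleftrightarrow> Y \<subseteq> borel_measurable M \<and> (\<lambda>x. 0) \<in> Y \<and>
     (\<forall>f\<in>Y. \<forall>g\<in>Y. (\<lambda>x. f x + g x) \<in> Y) \<and> (\<forall>f\<in>Y. \<forall>c::real. (\<lambda>x. c * f x) \<in> Y) \<and>
     (\<forall>f\<in>Y. \<forall>g\<in>borel_measurable M. (AE x in M. \<bar>g x\<bar> \<le> \<bar>f x\<bar>) \<longrightarrow> g \<in> Y)"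

definition qbfs :: "'a measure \<Rightarrow> ('a \<Rightarrow> real) set \<Rightarrow> (('a \<Rightarrow> real) \<Rightarrow> real) \<Rightarrow> bool" where
  "qbfs M Y nY \<longleftrightarrow> ideal_fs M Y \<and>
     (\<forall>f\<in>Y. nY f \<ge> 0) \<and>
     (\<forall>f\<in>Y. nY f = 0 \<longleftrightarrow> (AE x in M. f x = 0)) \<and>
     (\<forall>f\<in>Y. \<forall>c. nY (\<lambda>x. c * f x) = \<bar>c\<bar> * nY f) \<and>
     (\<exists>K\<ge>1. \<forall>f\<in>Y. \<forall>g\<in>Y. nY (\<lambda>x. f x + g x) \<le> K * (nY f + nY g)) \<and>
     (\<forall>f\<in>Y. \<forall>g\<in>Y. (AE x in M. \<bar>f x\<bar> \<le> \<bar>g x\<bar>) \<longrightarrow> nY f \<le> nY g) \<and>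
     (\<forall>u. (\<forall>n. u n \<in> Y) \<longrightarrow>
        (\<forall>e>0. \<exists>N. \<forall>m\<ge>N. \<forall>n\<ge>N. nY (\<lambda>x. u m x - u n x) < e) \<longrightarrow>
        (\<exists>v\<in>Y. (\<lambda>n. nY (\<lambda>x. u n x - v x)) \<longlonglongrightarrow> 0))"

definition sigma_order_cont :: "'a measure \<Rightarrow> ('a \<Rightarrow> real) set \<Rightarrow> (('a \<Rightarrow> real) \<Rightarrow> real) \<Rightarrow> bool" where
  "sigma_order_cont M Y nY \<longleftrightarrow> (\<forall>u. (\<forall>n. u n \<in> Y) \<longrightarrow>
     (AE x in M. decseq (\<lambda>n. u n x) \<and> (\<lambda>n. u n x) \<longlonglongrightarrow> 0) \<longrightarrow>
     (\<lambda>n. nY (u n)) \<longlonglongrightarrow> 0)"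

definition sigma_property :: "'a measure \<Rightarrow> ('a \<Rightarrow> real) set \<Rightarrow> bool" where
  "sigma_property M Y \<longleftrightarrow> (\<exists>\<Omega>::nat \<Rightarrow> 'a set. (\<forall>n. \<Omega> n \<in> sets M \<and> (indicator (\<Omega> n) :: 'a \<Rightarrow> real) \<in> Y)
      \<and> (\<Union>n. \<Omega> n) = space M)"

definition cont_lin_op :: "('a \<Rightarrow> real) set \<Rightarrow> (('a \<Rightarrow> real) \<Rightarrow> real) \<Rightarrow> (('a \<Rightarrow> real) \<Rightarrow> 'b::real_normed_vector) \<Rightarrow> bool" where
  "cont_lin_op Y nY T \<longleftrightarrow> (\<forall>f\<in>Y. \<forall>g\<in>Y. T (\<lambda>x. f x + g x) = T f + T g) \<and>
     (\<forall>f\<in>Y. \<forall>c. T (\<lambda>x. c * f x) = c *\<^sub>R T f) \<and>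
     (\<forall>f\<in>Y. \<forall>e>0. \<exists>d>0. \<forall>g\<in>Y. nY (\<lambda>x. g x - f x) < d \<longrightarrow> dist (T g) (T f) < e)"

definition SigmaX :: "'a measure \<Rightarrow> ('a \<Rightarrow> real) set \<Rightarrow> 'a set set" where
  "SigmaX M X = {A \<in> sets M. (indicator A :: 'a \<Rightarrow> real) \<in> X}"

definition mT :: "(('a \<Rightarrow> real) \<Rightarrow> 'b) \<Rightarrow> 'a set \<Rightarrow> 'b" where
  "mT T A = T (indicator A)"

definition sm_var :: "'a measure \<Rightarrow> 'a set set \<Rightarrow> ('a set \<Rightarrow> real) \<Rightarrow> 'a measure" where
  "sm_var M R \<nu> = measure_of (space M) (sets M)
     (\<lambda>A. SUP F\<in>{F. finite F \<and> F \<subseteq> R \<and> disjoint F \<and> (\<forall>B\<in>F. B \<subseteq> A)}. ennreal (\<Sum>B\<in>F. \<bar>\<nu> B\<bar>))"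

definition sm_pos :: "'a measure \<Rightarrow> 'a set set \<Rightarrow> ('a set \<Rightarrow> real) \<Rightarrow> 'a measure" where
  "sm_pos M R \<nu> = measure_of (space M) (sets M)
     (\<lambda>A. SUP B\<in>{B \<in> R. B \<subseteq> A}. ennreal (\<nu> B))"

definition sm_neg :: "'a measure \<Rightarrow> 'a set set \<Rightarrow> ('a set \<Rightarrow> real) \<Rightarrow> 'a measure" where
  "sm_neg M R \<nu> = measure_of (space M) (sets M)
     (\<lambda>A. SUP B\<in>{B \<in> R. B \<subseteq> A}. ennreal (- \<nu> B))"

definition sm_integral :: "'a measure \<Rightarrow> 'a set set \<Rightarrow> ('a set \<Rightarrow> real) \<Rightarrow> 'a set \<Rightarrow> ('a \<Rightarrow> real) \<Rightarrow> real" where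
  "sm_integral M R \<nu> A f = (LINT x:A|sm_pos M R \<nu>. f x) - (LINT x:A|sm_neg M R \<nu>. f x)"

definition vm_semivar :: "'a measure \<Rightarrow> 'a set set \<Rightarrow> ('a set \<Rightarrow> 'b::real_normed_vector) \<Rightarrow> 'a set \<Rightarrow> ennreal" where
  "vm_semivar M R m A = (SUP x'\<in>{x'::'b \<Rightarrow>\<^sub>L real. norm x' \<le> 1}. emeasure (sm_var M R (\<lambda>B. blinfun_apply x' (m B))) A)"

definition L1vm :: "'a measure \<Rightarrow> 'a set set \<Rightarrow> ('a set \<Rightarrow> 'b::real_normed_vector) \<Rightarrow> ('a \<Rightarrow> real) set" where
  "L1vm M R m = {f \<in> borel_measurable M.
     (\<forall>x'::'b \<Rightarrow>\<^sub>L real. integrable (sm_var M R (\<lambda>B. blinfun_apply x' (m B))) f) \<and>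
     (\<forall>A\<in>sets M. \<exists>e::'b. \<forall>x'::'b \<Rightarrow>\<^sub>L real. blinfun_apply x' e = sm_integral M R (\<lambda>B. blinfun_apply x' (m B)) A f)}"

definition L1vm_norm :: "'a measure \<Rightarrow> 'a set set \<Rightarrow> ('a set \<Rightarrow> 'b::real_normed_vector) \<Rightarrow> ('a \<Rightarrow> real) \<Rightarrow> ennreal" where
  "L1vm_norm M R m f = (SUP x'\<in>{x'::'b \<Rightarrow>\<^sub>L real. norm x' \<le> 1}.
      \<integral>\<^sup>+ x. ennreal \<bar>f x\<bar> \<partial>sm_var M R (\<lambda>B. blinfun_apply x' (m B)))"

definition vm_integral :: "'a measure \<Rightarrow> 'a set set \<Rightarrow> ('a set \<Rightarrow> 'b::real_normed_vector) \<Rightarrow> 'a set \<Rightarrow> ('a \<Rightarrow> real) \<Rightarrow> 'b" where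
  "vm_integral M R m A f = (THE e. \<forall>x'::'b \<Rightarrow>\<^sub>L real. blinfun_apply x' e = sm_integral M R (\<lambda>B. blinfun_apply x' (m B)) A f)"

definition I_vm :: "'a measure \<Rightarrow> 'a set set \<Rightarrow> ('a set \<Rightarrow> 'b::real_normed_vector) \<Rightarrow> ('a \<Rightarrow> real) \<Rightarrow> 'b" where
  "I_vm M R m f = vm_integral M R m (space M) f"

text \<open>[i]: Y(N) \<rightarrow> L^1(m) is well defined: ||m|| is absolutely continuous w.r.t. N and
  every f in Y lies in L^1(m).\<close>
definition incl_into_L1 :: "'a measure \<Rightarrow> ('a \<Rightarrow> real) set \<Rightarrow> 'a measure \<Rightarrow> 'a set set \<Rightarrow> ('a set \<Rightarrow> 'b::real_normed_vector) \<Rightarrow> bool" where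
  "incl_into_L1 N Y M R m \<longleftrightarrow> (\<forall>A\<in>sets N. emeasure N A = 0 \<longrightarrow> vm_semivar M R m A = 0) \<and> Y \<subseteq> L1vm M R m"

end

theory Submission
  imports Defs
begin


definition hbgood :: "('b::real_normed_vector \<times> real) set \<Rightarrow> bool" where
  "hbgood G \<longleftrightarrow> (\<forall>x a b. (x,a)\<in>G \<longrightarrow> (x,b)\<in>G \<longrightarrow> a=b) \<and>
     (\<forall>x a y b. (x,a)\<in>G \<longrightarrow> (y,b)\<in>G \<longrightarrow> (x+y, a+b) \<in> G) \<and>
     (\<forall>x a c. (x,a)\<in>G \<longrightarrow> (c *\<^sub>R x, c*a) \<in> G) \<and> (\<forall>x a. (x,a)\<in>G \<longrightarrow> \<bar>a\<bar> \<le> norm x)"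

lemma hb_extend:
  fixes G :: "('b::real_normed_vector \<times> real) set"
  assumes g: "hbgood G" and z: "\<forall>a. (z,a) \<notin> G" and G0: "(0,0) \<in> G"
  shows "\<exists>G'. hbgood G' \<and> G \<subseteq> G' \<and> G' \<noteq> G"
proof -
  have sv: "\<And>x a b. (x,a)\<in>G \<Longrightarrow> (x,b)\<in>G \<Longrightarrow> a=b"
   and ad: "\<And>x a y b. (x,a)\<in>G \<Longrightarrow> (y,b)\<in>G \<Longrightarrow> (x+y, a+b) \<in> G"
   and sc: "\<And>x a c. (x,a)\<in>G \<Longrightarrow> (c *\<^sub>R x, c*a) \<in> G"
   and bd: "\<And>x a. (x,a)\<in>G \<Longrightarrow> \<bar>a\<bar> \<le> norm x" using g unfolding hbgood_def by blast+
  define S where "S = {a - norm (x - z) | x a. (x,a) \<in> G}"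
  define c where "c = Sup S"
  have key: "a - norm (x - z) \<le> norm (y + z) - b" if "(x,a)\<in>G" "(y,b)\<in>G" for x a y b
  proof -
    have "a + b \<le> norm (x + y)" using bd[OF ad[OF that]] by simp
    also have "\<dots> \<le> norm (x - z) + norm (y + z)"
      using norm_triangle_ineq[of "x - z" "y + z"] by simp
    finally show ?thesis by simp
  qed
  have Sne: "S \<noteq> {}" using G0 unfolding S_def by blast
  have Sbd: "bdd_above S"
  proof (rule bdd_aboveI)
    fix s assume "s \<in> S"
    then obtain x a where "(x,a)\<in>G" "s = a - norm (x - z)" unfolding S_def by blast
    then show "s \<le> norm (0 + z) - 0" using key[of x a 0 0] G0 by simp
  qed
  have low: "a - norm (x - z) \<le> c" if "(x,a)\<in>G" for x a
    unfolding c_def by (rule cSup_upper[OF _ Sbd]) (use that S_def in blast)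
  have up: "c \<le> norm (y + z) - b" if "(y,b)\<in>G" for y b
    unfolding c_def by (rule cSup_least[OF Sne]) (use that key S_def in blast)
  have absb: "\<bar>b + c\<bar> \<le> norm (y + z)" if "(y,b)\<in>G" for y b
  proof -
    have "(-y, -b) \<in> G" using sc[OF that, of "-1"] by simp
    from low[OF this] have "-b - norm (-y - z) \<le> c" by simp
    moreover have "-y - z = -(y+z)" by simp
    ultimately have "-b - norm (y + z) \<le> c" by (simp only: norm_minus_cancel)
    with up[OF that] show ?thesis by linarith
  qed
  define G' where "G' = {(x + t *\<^sub>R z, a + t * c) | x a t. (x,a) \<in> G}"
  have inD: "(x' - x, a' - a) \<in> G" if "(x,a)\<in>G" "(x',a')\<in>G" for x a x' a'
    using ad[OF that(2) sc[OF that(1), of "-1"]] by simp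
  have "hbgood G'"
    unfolding hbgood_def
  proof (intro conjI allI impI)
    fix x a b assume A: "(x,a) \<in> G'" "(x,b) \<in> G'"
    then obtain x1 a1 t1 x2 a2 t2 where e: "(x1,a1)\<in>G" "x = x1 + t1 *\<^sub>R z" "a = a1 + t1 * c"
      "(x2,a2)\<in>G" "x = x2 + t2 *\<^sub>R z" "b = a2 + t2 * c" unfolding G'_def by blast
    show "a = b"
    proof (cases "t1 = t2")
      case True
      then have "x1 = x2" using e by simp
      then show ?thesis using e True sv by blast
    next
      case False
      have "(x2 - x1, a2 - a1) \<in> G" using inD e by blast
      from sc[OF this, of "1/(t1 - t2)"] have "((1/(t1-t2)) *\<^sub>R (x2 - x1), (1/(t1-t2)) * (a2-a1)) \<in> G" .
      moreover have "(1/(t1-t2)) *\<^sub>R (x2 - x1) = z"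
      proof -
        have "x2 - x1 = (t1 - t2) *\<^sub>R z" using e by (simp add: algebra_simps)
        then show ?thesis using False by simp
      qed
      ultimately have "(z, (1/(t1-t2)) * (a2-a1)) \<in> G" by simp
      with z show ?thesis by blast
    qed
  next
    fix x a y b assume "(x,a) \<in> G'" "(y,b) \<in> G'"
    then obtain x1 a1 t1 x2 a2 t2 where e: "(x1,a1)\<in>G" "x = x1 + t1 *\<^sub>R z" "a = a1 + t1 * c"
      "(x2,a2)\<in>G" "y = x2 + t2 *\<^sub>R z" "b = a2 + t2 * c" unfolding G'_def by blast
    have "(x1+x2, a1+a2) \<in> G" using ad e by blast
    moreover have "(x+y, a+b) = ((x1+x2) + (t1+t2) *\<^sub>R z, (a1+a2) + (t1+t2)*c)"
      using e by (simp add: algebra_simps)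
    ultimately show "(x+y, a+b) \<in> G'" unfolding G'_def by blast
  next
    fix x a r assume "(x,a) \<in> G'"
    then obtain x1 a1 t1 where e: "(x1,a1)\<in>G" "x = x1 + t1 *\<^sub>R z" "a = a1 + t1 * c"
      unfolding G'_def by blast
    have "(r *\<^sub>R x1, r*a1) \<in> G" using sc e by blast
    moreover have "(r *\<^sub>R x, r*a) = (r *\<^sub>R x1 + (r*t1) *\<^sub>R z, r*a1 + (r*t1)*c)"
      using e by (simp add: algebra_simps)
    ultimately show "(r *\<^sub>R x, r*a) \<in> G'" unfolding G'_def by blast
  next
    fix x a assume "(x,a) \<in> G'"
    then obtain x1 a1 t where e: "(x1,a1)\<in>G" "x = x1 + t *\<^sub>R z" "a = a1 + t * c"
      unfolding G'_def by blast
    show "\<bar>a\<bar> \<le> norm x"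
    proof (cases "t = 0")
      case True then show ?thesis using e bd by simp
    next
      case False
      have "((1/t) *\<^sub>R x1, (1/t)*a1) \<in> G" using sc e by blast
      from absb[OF this] have "\<bar>(1/t)*a1 + c\<bar> \<le> norm ((1/t) *\<^sub>R x1 + z)" .
      then have "\<bar>t\<bar> * \<bar>(1/t)*a1 + c\<bar> \<le> \<bar>t\<bar> * norm ((1/t) *\<^sub>R x1 + z)"
        by (simp add: mult_left_mono)
      moreover have "\<bar>t\<bar> * \<bar>(1/t)*a1 + c\<bar> = \<bar>a\<bar>" using False e
        by (simp add: abs_mult[symmetric] algebra_simps)
      moreover have "\<bar>t\<bar> * norm ((1/t) *\<^sub>R x1 + z) = norm x"
      proof -
        have "\<bar>t\<bar> * norm ((1/t) *\<^sub>R x1 + z) = norm (t *\<^sub>R ((1/t) *\<^sub>R x1 + z))" by simp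
        also have "t *\<^sub>R ((1/t) *\<^sub>R x1 + z) = x" using False e by (simp add: algebra_simps)
        finally show ?thesis .
      qed
      ultimately show ?thesis by simp
    qed
  qed
  moreover have "G \<subseteq> G'" unfolding G'_def by force
  moreover have "(z, c) \<in> G'" unfolding G'_def using G0 by force
  ultimately show ?thesis using z by blast
qed

lemma hahn_banach_norming:
  fixes w :: "'b::real_normed_vector"
  shows "\<exists>x'::'b \<Rightarrow>\<^sub>L real. norm x' \<le> 1 \<and> blinfun_apply x' w = norm w"
proof (cases "w = 0")
  case True then show ?thesis by (intro exI[of _ 0]) simp
next
  case False
  define G0 where "G0 = {(t *\<^sub>R w, t * norm w) | t. True}"
  have g0: "hbgood G0" unfolding hbgood_def
  proof (intro conjI allI impI)
    fix x a b assume "(x,a) \<in> G0" "(x,b) \<in> G0"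
    then obtain t s where "x = t *\<^sub>R w" "a = t * norm w" "x = s *\<^sub>R w" "b = s * norm w"
      unfolding G0_def by blast
    then show "a = b" using False by (metis scaleR_cancel_right)
  next
    fix x a y b assume "(x,a) \<in> G0" "(y,b) \<in> G0"
    then obtain t s where "x = t *\<^sub>R w" "a = t * norm w" "y = s *\<^sub>R w" "b = s * norm w"
      unfolding G0_def by blast
    then show "(x+y,a+b) \<in> G0" unfolding G0_def
      by (intro CollectI exI[of _ "t+s"]) (simp add: algebra_simps)
  next
    fix x a r assume "(x,a) \<in> G0"
    then obtain t where "x = t *\<^sub>R w" "a = t * norm w" unfolding G0_def by blast
    then show "(r *\<^sub>R x, r*a) \<in> G0" unfolding G0_def
      by (intro CollectI exI[of _ "r*t"]) (simp add: algebra_simps)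
  next
    fix x a assume "(x,a) \<in> G0"
    then obtain t where "x = t *\<^sub>R w" "a = t * norm w" unfolding G0_def by blast
    then show "\<bar>a\<bar> \<le> norm x" by (simp add: abs_mult)
  qed
  define A where "A = {G. hbgood G \<and> G0 \<subseteq> G}"
  have "\<exists>M\<in>A. \<forall>X\<in>A. M \<subseteq> X \<longrightarrow> X = M"
  proof (rule subset_Zorn_nonempty)
    show "A \<noteq> {}" using g0 A_def by blast
  next
    fix C assume "C \<noteq> {}" "subset.chain A C"
    then have CA: "C \<subseteq> A" and ch: "\<And>X Y. X \<in> C \<Longrightarrow> Y \<in> C \<Longrightarrow> X \<subseteq> Y \<or> Y \<subseteq> X"
      unfolding subset.chain_def by blast+
    have gC: "\<And>X. X \<in> C \<Longrightarrow> hbgood X" using CA A_def by blast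
    have two: "\<exists>X\<in>C. p \<in> X \<and> q \<in> X" if "p \<in> \<Union>C" "q \<in> \<Union>C" for p q
      using that ch by blast
    have "hbgood (\<Union>C)" unfolding hbgood_def
    proof (intro conjI allI impI)
      fix x a b assume "(x,a) \<in> \<Union>C" "(x,b) \<in> \<Union>C"
      then obtain X where "X\<in>C" "(x,a)\<in>X" "(x,b)\<in>X" using two by blast
      then show "a = b" using gC unfolding hbgood_def by blast
    next
      fix x a y b assume "(x,a) \<in> \<Union>C" "(y,b) \<in> \<Union>C"
      then obtain X where "X\<in>C" "(x,a)\<in>X" "(y,b)\<in>X" using two by blast
      then show "(x+y,a+b) \<in> \<Union>C" using gC unfolding hbgood_def by blast
    next
      fix x a r assume "(x,a) \<in> \<Union>C"
      then obtain X where "X\<in>C" "(x,a)\<in>X" by blast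
      then show "(r *\<^sub>R x, r*a) \<in> \<Union>C" using gC unfolding hbgood_def by blast
    next
      fix x a assume "(x,a) \<in> \<Union>C"
      then obtain X where "X\<in>C" "(x,a)\<in>X" by blast
      then show "\<bar>a\<bar> \<le> norm x" using gC unfolding hbgood_def by blast
    qed
    moreover have "G0 \<subseteq> \<Union>C" using \<open>C \<noteq> {}\<close> CA A_def by blast
    ultimately show "\<Union>C \<in> A" unfolding A_def by blast
  qed
  then obtain G where GA: "G \<in> A" and max: "\<And>X. X \<in> A \<Longrightarrow> G \<subseteq> X \<Longrightarrow> X = G" by blast
  have gG: "hbgood G" and G0G: "G0 \<subseteq> G" using GA A_def by auto
  have zero: "(0,0) \<in> G" using G0G unfolding G0_def by force
  have tot: "\<exists>a. (x,a) \<in> G" for x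
  proof (rule ccontr)
    assume "\<not> ?thesis"
    then obtain G' where "hbgood G'" "G \<subseteq> G'" "G' \<noteq> G" using hb_extend[OF gG _ zero, of x] by blast
    moreover have "G' \<in> A" using calculation G0G A_def by blast
    ultimately show False using max by blast
  qed
  have sv: "\<And>x a b. (x,a)\<in>G \<Longrightarrow> (x,b)\<in>G \<Longrightarrow> a=b"
   and ad: "\<And>x a y b. (x,a)\<in>G \<Longrightarrow> (y,b)\<in>G \<Longrightarrow> (x+y, a+b) \<in> G"
   and sc: "\<And>x a c. (x,a)\<in>G \<Longrightarrow> (c *\<^sub>R x, c*a) \<in> G"
   and bd: "\<And>x a. (x,a)\<in>G \<Longrightarrow> \<bar>a\<bar> \<le> norm x" using gG unfolding hbgood_def by blast+
  define f where "f x = (THE a. (x,a) \<in> G)" for x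
  have fG: "(x, f x) \<in> G" for x
    unfolding f_def using tot[of x] sv by (metis theI)
  have fe: "(x,a) \<in> G \<Longrightarrow> f x = a" for x a using fG sv by blast
  have bl: "bounded_linear f"
  proof (rule bounded_linear_intro[where K=1])
    show "f (x + y) = f x + f y" for x y using fe[OF ad[OF fG fG]] .
    show "f (r *\<^sub>R x) = r *\<^sub>R f x" for r x using fe[OF sc[OF fG]] by simp
    show "norm (f x) \<le> norm x * 1" for x using bd[OF fG] by simp
  qed
  define x' where "x' = Blinfun f"
  have ap: "blinfun_apply x' = f" unfolding x'_def using bl by (simp add: bounded_linear_Blinfun_apply)
  have "norm x' \<le> 1"
    by (rule norm_blinfun_bound) (use bd fG ap in auto)
  moreover have "(w, norm w) \<in> G" using G0G unfolding G0_def by (force intro: exI[of _ 1])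
  ultimately show ?thesis using ap fe by blast
qed

lemma hb_sep:
  fixes e1 e2 :: "'b::real_normed_vector"
  assumes "\<And>x'::'b \<Rightarrow>\<^sub>L real. blinfun_apply x' e1 = blinfun_apply x' e2"
  shows "e1 = e2"
proof -
  obtain x'::"'b \<Rightarrow>\<^sub>L real" where "blinfun_apply x' (e1 - e2) = norm (e1 - e2)"
    using hahn_banach_norming by blast
  then have "norm (e1 - e2) = 0" using assms[of x'] by (simp add: blinfun.diff_right)
  then show ?thesis by simp
qed




lemma ennreal_sum_le: "ennreal (sum f I) \<le> (\<Sum>i\<in>I. ennreal (f i))"
proof -
  have "ennreal (sum f I) \<le> ennreal (sum (\<lambda>i. max (f i) 0) I)"
    by (intro ennreal_leI sum_mono) simp
  also have "\<dots> = (\<Sum>i\<in>I. ennreal (max (f i) 0))" by (subst sum_ennreal) auto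
  also have "\<dots> = (\<Sum>i\<in>I. ennreal (f i))" by (intro sum.cong refl) (simp add: max_def ennreal_neg)
  finally show ?thesis .
qed


lemma nn_integral_sum_meas:
  assumes sN: "sets N = sets M" and sP: "sets P = sets M" and sQ: "sets Q = sets M"
    and eq: "\<And>A. A \<in> sets M \<Longrightarrow> emeasure N A = emeasure P A + emeasure Q A"
    and f: "f \<in> borel_measurable M"
  shows "(\<integral>\<^sup>+x. f x \<partial>N) = (\<integral>\<^sup>+x. f x \<partial>P) + (\<integral>\<^sup>+x. f x \<partial>Q)"
  using f
proof (induction rule: borel_measurable_induct)
  have spN: "space N = space M" "space P = space M" "space Q = space M"
    using sN sP sQ sets_eq_imp_space_eq by blast+
  case (cong f g)
  have "(\<integral>\<^sup>+x. f x \<partial>N) = (\<integral>\<^sup>+x. g x \<partial>N)" "(\<integral>\<^sup>+x. f x \<partial>P) = (\<integral>\<^sup>+x. g x \<partial>P)"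
    "(\<integral>\<^sup>+x. f x \<partial>Q) = (\<integral>\<^sup>+x. g x \<partial>Q)"
    by (intro nn_integral_cong; simp add: spN cong(3))+
  then show ?case using cong by simp
next
  case (set A)
  then show ?case using eq sN sP sQ by (simp add: nn_integral_indicator)
next
  case (mult u c)
  have m: "u \<in> borel_measurable N" "u \<in> borel_measurable P" "u \<in> borel_measurable Q"
    using mult measurable_cong_sets[OF _ refl] sN sP sQ by blast+
  show ?case using mult by (simp add: nn_integral_cmult[OF m(1)] nn_integral_cmult[OF m(2)]
      nn_integral_cmult[OF m(3)] distrib_left)
next
  case (add u v)
  have m: "u \<in> borel_measurable N" "u \<in> borel_measurable P" "u \<in> borel_measurable Q"
    "v \<in> borel_measurable N" "v \<in> borel_measurable P" "v \<in> borel_measurable Q"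
    using add measurable_cong_sets[OF _ refl] sN sP sQ by blast+
  show ?case using add by (simp add: nn_integral_add m add_ac)
next
  case (seq U)
  have m: "\<And>i. U i \<in> borel_measurable N" "\<And>i. U i \<in> borel_measurable P" "\<And>i. U i \<in> borel_measurable Q"
    using seq measurable_cong_sets[OF _ refl] sN sP sQ by blast+
  have e: "(\<integral>\<^sup>+x. (SUP i. U i x) \<partial>K) = (SUP i. \<integral>\<^sup>+x. U i x \<partial>K)" if "\<And>i. U i \<in> borel_measurable K" for K
    using nn_integral_monotone_convergence_SUP[OF \<open>incseq U\<close> that] .
  have inc: "incseq (\<lambda>i. \<integral>\<^sup>+x. U i x \<partial>K)" for K
    using \<open>incseq U\<close> by (auto simp: incseq_def le_fun_def intro!: nn_integral_mono)
  have fe: "(SUP i. U i) = (\<lambda>x. SUP i. U i x)" by (simp add: fun_eq_iff image_comp)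
  have IH: "\<And>i. (\<integral>\<^sup>+x. U i x \<partial>N) = (\<integral>\<^sup>+x. U i x \<partial>P) + (\<integral>\<^sup>+x. U i x \<partial>Q)" using seq by simp
  show ?case unfolding fe e[OF m(1)] e[OF m(2)] e[OF m(3)] IH
    by (rule ennreal_SUP_add[OF inc inc])
qed

locale jset =
  fixes M :: "'a measure" and R :: "'a set set" and \<nu> :: "'a set \<Rightarrow> real"
  assumes R_sets: "R \<subseteq> sets M"
  and R_empty: "{} \<in> R"
  and R_her: "\<And>B C. B \<in> R \<Longrightarrow> C \<in> sets M \<Longrightarrow> C \<subseteq> B \<Longrightarrow> C \<in> R"
  and R_un: "\<And>B C. B \<in> R \<Longrightarrow> C \<in> R \<Longrightarrow> B \<union> C \<in> R"
  and \<nu>_add: "\<And>B C. B \<in> R \<Longrightarrow> C \<in> R \<Longrightarrow> B \<inter> C = {} \<Longrightarrow> \<nu> (B \<union> C) = \<nu> B + \<nu> C"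
  and \<nu>_ca: "\<And>A. range A \<subseteq> R \<Longrightarrow> disjoint_family A \<Longrightarrow> (\<Union>i. A i) \<in> R \<Longrightarrow> (\<lambda>i. \<nu> (A i)) sums \<nu> (\<Union>i. A i)"
  and \<nu>_bd: "\<And>B. B \<in> R \<Longrightarrow> \<exists>K. \<forall>C\<in>R. C \<subseteq> B \<longrightarrow> \<bar>\<nu> C\<bar> \<le> K"
begin

definition "pf A = (SUP B\<in>{B \<in> R. B \<subseteq> A}. ennreal (\<nu> B))"

lemma \<nu>_empty: "\<nu> {} = 0" using \<nu>_add[OF R_empty R_empty] by simp

lemma R_diff: "B \<in> R \<Longrightarrow> C \<in> sets M \<Longrightarrow> B - C \<in> R"
  by (rule R_her[of B]) (use R_sets in auto)

lemma R_int: "B \<in> R \<Longrightarrow> C \<in> sets M \<Longrightarrow> B \<inter> C \<in> R"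
  by (rule R_her[of B]) (use R_sets in auto)

lemma pf_mono: "A \<subseteq> A' \<Longrightarrow> pf A \<le> pf A'"
  unfolding pf_def by (rule SUP_subset_mono) auto

lemma pf_empty: "pf {} = 0"
proof -
  have "{B \<in> R. B \<subseteq> {}} = {{}}" using R_empty by auto
  then show ?thesis unfolding pf_def by (simp add: \<nu>_empty)
qed

lemma pos_part: "B \<in> R \<Longrightarrow> \<exists>B'\<in>R. B' \<subseteq> B \<and> ennreal (\<nu> B) = ennreal (\<nu> B') \<and> 0 \<le> \<nu> B'"
proof (cases "0 \<le> \<nu> B")
  case False
  then show "\<exists>B'\<in>R. B' \<subseteq> B \<and> ennreal (\<nu> B) = ennreal (\<nu> B') \<and> 0 \<le> \<nu> B'"
    by (intro bexI[of _ "{}"]) (auto simp: R_empty \<nu>_empty ennreal_neg)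
qed auto

lemma pf_super:
  assumes "A \<in> sets M" "A' \<in> sets M" "A \<inter> A' = {}"
  shows "pf A + pf A' \<le> pf (A \<union> A')"
proof -
  have ne: "{B \<in> R. B \<subseteq> A} \<noteq> {}" "{B \<in> R. B \<subseteq> A'} \<noteq> {}" using R_empty by auto
  have "pf A + pf A' = (SUP B\<in>{B \<in> R. B \<subseteq> A}. ennreal (\<nu> B) + pf A')"
    unfolding pf_def[of A] by (rule ennreal_SUP_add_left[symmetric, OF ne(1)])
  also have "\<dots> \<le> pf (A \<union> A')"
  proof (rule SUP_least)
    fix B assume B: "B \<in> {B \<in> R. B \<subseteq> A}"
    have "ennreal (\<nu> B) + pf A' = pf A' + ennreal (\<nu> B)" by (simp add: add.commute)
    also have "\<dots> = (SUP C\<in>{B \<in> R. B \<subseteq> A'}. ennreal (\<nu> C) + ennreal (\<nu> B))"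
      unfolding pf_def[of A'] by (rule ennreal_SUP_add_left[symmetric, OF ne(2)])
    also have "\<dots> \<le> pf (A \<union> A')"
    proof (rule SUP_least)
      fix C assume C: "C \<in> {B \<in> R. B \<subseteq> A'}"
      obtain B' where B': "B' \<in> R" "B' \<subseteq> B" "ennreal (\<nu> B) = ennreal (\<nu> B')" "0 \<le> \<nu> B'"
        using pos_part B by blast
      obtain C' where C': "C' \<in> R" "C' \<subseteq> C" "ennreal (\<nu> C) = ennreal (\<nu> C')" "0 \<le> \<nu> C'"
        using pos_part C by blast
      have d: "B' \<inter> C' = {}" using B C B' C' assms(3) by blast
      have "ennreal (\<nu> C) + ennreal (\<nu> B) = ennreal (\<nu> (B' \<union> C'))"
        using B' C' \<nu>_add[OF B'(1) C'(1) d] by (simp add: add.commute)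
      also have "\<dots> \<le> pf (A \<union> A')" unfolding pf_def
        by (rule SUP_upper) (use B C B' C' R_un in blast)
      finally show "ennreal (\<nu> C) + ennreal (\<nu> B) \<le> pf (A \<union> A')" .
    qed
    finally show "ennreal (\<nu> B) + pf A' \<le> pf (A \<union> A')" .
  qed
  finally show ?thesis .
qed

lemma pf_finite: "B \<in> R \<Longrightarrow> pf B < \<infinity>"
proof -
  assume B: "B \<in> R"
  obtain K where K: "\<forall>C\<in>R. C \<subseteq> B \<longrightarrow> \<bar>\<nu> C\<bar> \<le> K" using \<nu>_bd[OF B] by blast
  have "pf B \<le> ennreal K" unfolding pf_def
    by (rule SUP_least) (use K in \<open>auto intro!: ennreal_leI\<close>)
  also have "ennreal K < \<infinity>" by simp
  finally show ?thesis .
qed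

lemma pf_ca: "countably_additive (sets M) pf"
  unfolding countably_additive_def
proof (intro allI impI)
  fix A :: "nat \<Rightarrow> 'a set" assume A: "range A \<subseteq> sets M" "disjoint_family A" "(\<Union>i. A i) \<in> sets M"
  have fin: "(\<Sum>i<n. pf (A i)) \<le> pf (\<Union>i<n. A i)" for n
  proof (induction n)
    case 0 then show ?case by (simp add: pf_empty)
  next
    case (Suc n)
    have "(\<Sum>i<Suc n. pf (A i)) = (\<Sum>i<n. pf (A i)) + pf (A n)" by simp
    also have "\<dots> \<le> pf (\<Union>i<n. A i) + pf (A n)" using Suc by (rule add_right_mono)
    also have "\<dots> \<le> pf ((\<Union>i<n. A i) \<union> A n)"
    proof (rule pf_super)
      show "(\<Union>i<n. A i) \<inter> A n = {}"
      proof (safe)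
        fix x i assume "i < n" "x \<in> A i" "x \<in> A n"
        then have "i \<noteq> n" by simp
        then have "A i \<inter> A n = {}" using A(2) unfolding disjoint_family_on_def by blast
        then show "x \<in> {}" using \<open>x \<in> A i\<close> \<open>x \<in> A n\<close> by blast
      qed
    qed (use A in auto)
    also have "(\<Union>i<n. A i) \<union> A n = (\<Union>i<Suc n. A i)" by (auto simp: lessThan_Suc)
    finally show ?case .
  qed
  have le1: "(\<Sum>i. pf (A i)) \<le> pf (\<Union>i. A i)"
    unfolding suminf_eq_SUP
  proof (rule SUP_least)
    fix n :: nat
    have "(\<Union>i<n. A i) \<subseteq> (\<Union>i. A i)" by blast
    from order_trans[OF fin pf_mono[OF this]] show "(\<Sum>i<n. pf (A i)) \<le> pf (\<Union>i. A i)" .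
  qed
  have le2: "pf (\<Union>i. A i) \<le> (\<Sum>i. pf (A i))"
    unfolding pf_def[of "\<Union>i. A i"]
  proof (rule SUP_least)
    fix B assume B: "B \<in> {B \<in> R. B \<subseteq> (\<Union>i. A i)}"
    define C where "C i = B \<inter> A i" for i
    have CR: "range C \<subseteq> R" using B A R_int unfolding C_def by auto
    have dC: "disjoint_family C" using A(2) unfolding C_def disjoint_family_on_def by blast
    have UC: "(\<Union>i. C i) = B" using B unfolding C_def by blast
    have s: "(\<lambda>i. \<nu> (C i)) sums \<nu> B" using \<nu>_ca[OF CR dC] UC B by simp
    then have "(\<lambda>n. \<Sum>i<n. \<nu> (C i)) \<longlonglongrightarrow> \<nu> B" by (simp add: sums_def)
    then have lim: "(\<lambda>n. ennreal (\<Sum>i<n. \<nu> (C i))) \<longlonglongrightarrow> ennreal (\<nu> B)"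
      by (rule tendsto_ennrealI)
    have "ennreal (\<Sum>i<n. \<nu> (C i)) \<le> (\<Sum>i. pf (A i))" for n
    proof -
      have "ennreal (\<Sum>i<n. \<nu> (C i)) \<le> (\<Sum>i<n. ennreal (\<nu> (C i)))" by (rule ennreal_sum_le)
      also have "\<dots> \<le> (\<Sum>i<n. pf (A i))" unfolding pf_def
        by (intro sum_mono SUP_upper) (use CR C_def in auto)
      also have "\<dots> \<le> (\<Sum>i. pf (A i))" by (rule sum_le_suminf) auto
      finally show ?thesis .
    qed
    then show "ennreal (\<nu> B) \<le> (\<Sum>i. pf (A i))"
      using Lim_bounded[OF lim, of 0 "\<Sum>i. pf (A i)"] by blast
  qed
  show "(\<Sum>i. pf (A i)) = pf (\<Union>i. A i)" using le1 le2 by (rule antisym)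
qed

lemma pf_positive: "positive (sets M) pf"
  unfolding positive_def by (simp add: pf_empty)

lemma emeasure_pos: "A \<in> sets M \<Longrightarrow> emeasure (sm_pos M R \<nu>) A = pf A"
  unfolding sm_pos_def pf_def[symmetric]
  using emeasure_measure_of_sigma[OF sets.sigma_algebra_axioms pf_positive pf_ca] by blast

lemma sets_pos[simp]: "sets (sm_pos M R \<nu>) = sets M"
  unfolding sm_pos_def using sets.sets_into_space by (subst sets_measure_of) (auto simp: sets.sigma_sets_eq)

lemma space_pos[simp]: "space (sm_pos M R \<nu>) = space M"
  unfolding sm_pos_def by simp


lemma jset_neg: "jset M R (\<lambda>B. - \<nu> B)"
proof
  show "\<And>B C. B \<in> R \<Longrightarrow> C \<in> R \<Longrightarrow> B \<inter> C = {} \<Longrightarrow> - \<nu> (B \<union> C) = - \<nu> B + - \<nu> C"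
    using \<nu>_add by simp
  show "\<And>A. range A \<subseteq> R \<Longrightarrow> disjoint_family A \<Longrightarrow> (\<Union>i. A i) \<in> R \<Longrightarrow> (\<lambda>i. - \<nu> (A i)) sums - \<nu> (\<Union>i. A i)"
    using \<nu>_ca sums_minus by blast
  show "\<And>B. B \<in> R \<Longrightarrow> \<exists>K. \<forall>C\<in>R. C \<subseteq> B \<longrightarrow> \<bar>- \<nu> C\<bar> \<le> K"
    using \<nu>_bd by simp
qed (use R_sets R_empty R_her R_un in auto)

definition "nf A = (SUP B\<in>{B \<in> R. B \<subseteq> A}. ennreal (- \<nu> B))"

lemma nf_pf: "nf = jset.pf R (\<lambda>B. - \<nu> B)"
  unfolding nf_def jset.pf_def[OF jset_neg] by simp

lemma sm_neg_eq: "sm_neg M R \<nu> = sm_pos M R (\<lambda>B. - \<nu> B)"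
  unfolding sm_neg_def sm_pos_def by simp

lemma bdd_RB: "B \<in> R \<Longrightarrow> bdd_above ((\<lambda>C. f (\<nu> C)) ` {C \<in> R. C \<subseteq> B})" if "\<And>x. f x \<le> \<bar>x\<bar>"
proof -
  assume B: "B \<in> R"
  obtain K where K: "\<forall>C\<in>R. C \<subseteq> B \<longrightarrow> \<bar>\<nu> C\<bar> \<le> K" using \<nu>_bd[OF B] by blast
  show ?thesis by (rule bdd_aboveI[of _ K]) (use K that in \<open>auto intro: order_trans\<close>)
qed

lemma pf_real:
  assumes B: "B \<in> R"
  shows "pf B = ennreal (SUP C\<in>{C \<in> R. C \<subseteq> B}. \<nu> C)"
proof (rule antisym)
  have bd: "bdd_above ((\<lambda>C. \<nu> C) ` {C \<in> R. C \<subseteq> B})" using bdd_RB[OF _ B, of "\<lambda>x. x"] by simp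
  show "pf B \<le> ennreal (SUP C\<in>{C \<in> R. C \<subseteq> B}. \<nu> C)" unfolding pf_def
    by (rule SUP_least, rule ennreal_leI, rule cSUP_upper[OF _ bd]) auto
  obtain q where q: "pf B = ennreal q" "0 \<le> q" using pf_finite[OF B]
    by (cases "pf B") auto
  have "\<nu> C \<le> q" if "C \<in> R" "C \<subseteq> B" for C
  proof -
    have "ennreal (\<nu> C) \<le> pf B" unfolding pf_def by (rule SUP_upper) (use that in auto)
    then show ?thesis using q by (simp add: ennreal_le_iff)
  qed
  then have "(SUP C\<in>{C \<in> R. C \<subseteq> B}. \<nu> C) \<le> q"
    by (intro cSUP_least) (use R_empty in auto)
  then show "ennreal (SUP C\<in>{C \<in> R. C \<subseteq> B}. \<nu> C) \<le> pf B" using q by (simp add: ennreal_leI)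
qed

lemma nf_real:
  assumes B: "B \<in> R"
  shows "nf B = ennreal (SUP C\<in>{C \<in> R. C \<subseteq> B}. - \<nu> C)"
  using jset.pf_real[OF jset_neg B] unfolding nf_pf .

lemma jordan:
  assumes B: "B \<in> R"
  shows "enn2real (pf B) - enn2real (nf B) = \<nu> B"
proof -
  let ?RB = "{C \<in> R. C \<subseteq> B}"
  define p where "p = (SUP C\<in>?RB. \<nu> C)"
  define n where "n = (SUP C\<in>?RB. - \<nu> C)"
  have ne: "?RB \<noteq> {}" using R_empty by auto
  have bd: "bdd_above ((\<lambda>C. \<nu> C) ` ?RB)" using bdd_RB[OF _ B, of "\<lambda>x. x"] by simp
  have bdn: "bdd_above ((\<lambda>C. - \<nu> C) ` ?RB)" using bdd_RB[OF _ B, of "\<lambda>x. - x"] by simp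
  have p0: "0 \<le> p" unfolding p_def using cSUP_upper[OF _ bd, of "{}"] R_empty \<nu>_empty by simp
  have n0: "0 \<le> n" unfolding n_def using cSUP_upper[OF _ bdn, of "{}"] R_empty \<nu>_empty by simp
  have split: "\<nu> B = \<nu> C + \<nu> (B - C)" if "C \<in> R" "C \<subseteq> B" for C
  proof -
    have "B = C \<union> (B - C)" using that by blast
    moreover have "B - C \<in> R" using R_diff B that R_sets by blast
    ultimately show ?thesis using \<nu>_add[OF that(1), of "B - C"] by (metis Diff_disjoint)
  qed
  have diffR: "C \<in> R \<Longrightarrow> C \<subseteq> B \<Longrightarrow> B - C \<in> ?RB" for C using R_diff B R_sets by blast
  have "n \<le> p - \<nu> B" unfolding n_def
  proof (rule cSUP_least[OF ne])
    fix C assume C: "C \<in> ?RB"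
    have "\<nu> (B - C) \<le> p" unfolding p_def by (rule cSUP_upper[OF _ bd]) (use diffR C in auto)
    then show "- \<nu> C \<le> p - \<nu> B" using split C by auto
  qed
  moreover have "p \<le> n + \<nu> B" unfolding p_def
  proof (rule cSUP_least[OF ne])
    fix C assume C: "C \<in> ?RB"
    have "- \<nu> (B - C) \<le> n" unfolding n_def by (rule cSUP_upper[OF _ bdn]) (use diffR C in auto)
    then show "\<nu> C \<le> n + \<nu> B" using split C by auto
  qed
  ultimately have "n = p - \<nu> B" by simp
  then show ?thesis using pf_real[OF B] nf_real[OF B] p0 n0 p_def n_def by simp
qed

lemma \<nu>_Union: "finite F \<Longrightarrow> F \<subseteq> R \<Longrightarrow> disjoint F \<Longrightarrow> \<Union>F \<in> R \<and> \<nu> (\<Union>F) = (\<Sum>B\<in>F. \<nu> B)"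
proof (induction F rule: finite_induct)
  case empty then show ?case by (simp add: R_empty \<nu>_empty)
next
  case (insert B F)
  have dF: "disjoint F" using insert.prems(2) by (simp add: pairwise_insert)
  have IH: "\<Union>F \<in> R \<and> \<nu> (\<Union>F) = (\<Sum>B\<in>F. \<nu> B)" using insert dF by blast
  have "B \<inter> \<Union>F = {}"
  proof -
    have "\<forall>C\<in>F. disjnt B C" using insert.prems(2) insert.hyps(2) by (auto simp: pairwise_insert)
    then show ?thesis by (auto simp: disjnt_def)
  qed
  then show ?case using IH insert \<nu>_add[of B "\<Union>F"] R_un[of B "\<Union>F"] by simp
qed

definition "vf A = (SUP F\<in>{F. finite F \<and> F \<subseteq> R \<and> disjoint F \<and> (\<forall>B\<in>F. B \<subseteq> A)}. ennreal (\<Sum>B\<in>F. \<bar>\<nu> B\<bar>))"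

lemma vf_le: "vf A \<le> pf A + nf A"
  unfolding vf_def
proof (rule SUP_least)
  fix F assume F: "F \<in> {F. finite F \<and> F \<subseteq> R \<and> disjoint F \<and> (\<forall>B\<in>F. B \<subseteq> A)}"
  define Fp where "Fp = {B\<in>F. 0 \<le> \<nu> B}"
  define Fm where "Fm = {B\<in>F. \<not> 0 \<le> \<nu> B}"
  have Fs: "finite F" "F \<subseteq> R" "disjoint F" "\<forall>B\<in>F. B \<subseteq> A" using F by auto
  have sub0: "Fp \<subseteq> F" "Fm \<subseteq> F" unfolding Fp_def Fm_def by auto
  have fin: "finite Fp" "finite Fm" using Fs(1) sub0 finite_subset by blast+
  have dp: "disjoint Fp" "disjoint Fm" using Fs(3) sub0 pairwise_subset by blast+
  have Up: "\<Union>Fp \<in> R \<and> \<nu> (\<Union>Fp) = (\<Sum>B\<in>Fp. \<nu> B)"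
    by (rule \<nu>_Union[OF fin(1) _ dp(1)]) (use Fs(2) sub0 in blast)
  have Um: "\<Union>Fm \<in> R \<and> \<nu> (\<Union>Fm) = (\<Sum>B\<in>Fm. \<nu> B)"
    by (rule \<nu>_Union[OF fin(2) _ dp(2)]) (use Fs(2) sub0 in blast)
  have "(\<Sum>B\<in>F. \<bar>\<nu> B\<bar>) = (\<Sum>B\<in>Fp. \<bar>\<nu> B\<bar>) + (\<Sum>B\<in>Fm. \<bar>\<nu> B\<bar>)"
  proof -
    have "F = Fp \<union> Fm" "Fp \<inter> Fm = {}" unfolding Fp_def Fm_def by auto
    then show ?thesis using sum.union_disjoint[OF fin] by simp
  qed
  also have "(\<Sum>B\<in>Fp. \<bar>\<nu> B\<bar>) = \<nu> (\<Union>Fp)" using Up by (simp add: Fp_def)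
  also have "(\<Sum>B\<in>Fm. \<bar>\<nu> B\<bar>) = - \<nu> (\<Union>Fm)" using Um by (simp add: Fm_def sum_negf[symmetric])
  finally have eq: "(\<Sum>B\<in>F. \<bar>\<nu> B\<bar>) = \<nu> (\<Union>Fp) + - \<nu> (\<Union>Fm)" .
  have "0 \<le> (\<Sum>B\<in>Fp. \<nu> B)" unfolding Fp_def by (rule sum_nonneg) simp
  then have nn1: "0 \<le> \<nu> (\<Union>Fp)" using Up by simp
  have "(\<Sum>B\<in>Fm. \<nu> B) \<le> 0" unfolding Fm_def by (rule sum_nonpos) simp
  then have nn2: "\<nu> (\<Union>Fm) \<le> 0" using Um by simp
  have nn: "0 \<le> \<nu> (\<Union>Fp)" "0 \<le> - \<nu> (\<Union>Fm)" using nn1 nn2 by auto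
  have sub: "\<Union>Fp \<subseteq> A" "\<Union>Fm \<subseteq> A" using Fs(4) sub0 by blast+
  have "ennreal (\<Sum>B\<in>F. \<bar>\<nu> B\<bar>) = ennreal (\<nu> (\<Union>Fp)) + ennreal (- \<nu> (\<Union>Fm))"
    using eq nn ennreal_plus[OF nn] by simp
  also have "\<dots> \<le> pf A + nf A"
    unfolding pf_def nf_def
    by (intro add_mono SUP_upper) (use Up Um sub in blast)+
  finally show "ennreal (\<Sum>B\<in>F. \<bar>\<nu> B\<bar>) \<le> pf A + nf A" .
qed

lemma vf_ge: "pf A + nf A \<le> vf A"
proof -
  have ne: "{B \<in> R. B \<subseteq> A} \<noteq> {}" using R_empty by auto
  have "pf A + nf A = (SUP C\<in>{B \<in> R. B \<subseteq> A}. ennreal (\<nu> C) + nf A)"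
    unfolding pf_def[of A] by (rule ennreal_SUP_add_left[symmetric, OF ne])
  also have "\<dots> \<le> vf A"
  proof (rule SUP_least)
    fix C assume C: "C \<in> {B \<in> R. B \<subseteq> A}"
    have "ennreal (\<nu> C) + nf A = nf A + ennreal (\<nu> C)" by (simp add: add.commute)
    also have "\<dots> = (SUP D\<in>{B \<in> R. B \<subseteq> A}. ennreal (- \<nu> D) + ennreal (\<nu> C))"
      unfolding nf_def by (rule ennreal_SUP_add_left[symmetric, OF ne])
    also have "\<dots> \<le> vf A"
    proof (rule SUP_least)
      fix D assume D: "D \<in> {B \<in> R. B \<subseteq> A}"
      obtain C' where C': "C' \<in> R" "C' \<subseteq> C" "ennreal (\<nu> C) = ennreal (\<nu> C')" "0 \<le> \<nu> C'"
        using pos_part C by blast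
      obtain D' where D': "D' \<in> R" "D' \<subseteq> D" "ennreal (- \<nu> D) = ennreal (- \<nu> D')" "0 \<le> - \<nu> D'"
        using jset.pos_part[OF jset_neg, of D] D by auto
      have R1: "C' - D' \<in> R" "D' - C' \<in> R" "C' \<inter> D' \<in> R" using C' D' R_diff R_int R_sets by auto
      have e1: "\<nu> C' = \<nu> (C' - D') + \<nu> (C' \<inter> D')"
        using \<nu>_add[OF R1(1) R1(3)] by (metis Diff_disjoint Int_Diff_disjoint Int_commute Un_Diff_Int)
      have e2: "\<nu> D' = \<nu> (D' - C') + \<nu> (C' \<inter> D')"
        using \<nu>_add[OF R1(2) R1(3)] by (metis Diff_disjoint Int_Diff_disjoint Int_commute Un_Diff_Int)
      define F where "F = {C' - D', D' - C'}"
      have FF: "F \<in> {F. finite F \<and> F \<subseteq> R \<and> disjoint F \<and> (\<forall>B\<in>F. B \<subseteq> A)}"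
        unfolding F_def using R1 C D C' D' by (auto simp: pairwise_def disjnt_def)
      have "\<nu> C' - \<nu> D' \<le> (\<Sum>B\<in>F. \<bar>\<nu> B\<bar>)"
      proof (cases "C' - D' = D' - C'")
        case True
        then have "C' - D' = {}" "D' - C' = {}" by blast+
        then show ?thesis using e1 e2 F_def by (simp add: \<nu>_empty)
      next
        case False
        then show ?thesis using e1 e2 F_def by simp
      qed
      then have "ennreal (- \<nu> D) + ennreal (\<nu> C) \<le> ennreal (\<Sum>B\<in>F. \<bar>\<nu> B\<bar>)"
        using C' D' by (simp add: ennreal_plus[symmetric] ennreal_leI del: ennreal_plus)
      also have "\<dots> \<le> vf A" unfolding vf_def by (rule SUP_upper[OF FF])
      finally show "ennreal (- \<nu> D) + ennreal (\<nu> C) \<le> vf A" .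
    qed
    finally show "ennreal (\<nu> C) + nf A \<le> vf A" .
  qed
  finally show ?thesis .
qed

lemma vf_eq: "vf A = pf A + nf A" using vf_le vf_ge by (rule antisym)

lemma nf_ca: "countably_additive (sets M) nf"
  using jset.pf_ca[OF jset_neg] unfolding nf_pf .

lemma vf_ca: "countably_additive (sets M) vf"
  unfolding countably_additive_def vf_eq
proof (intro allI impI)
  fix A :: "nat \<Rightarrow> 'a set" assume A: "range A \<subseteq> sets M" "disjoint_family A" "(\<Union>i. A i) \<in> sets M"
  have "(\<Sum>i. pf (A i) + nf (A i)) = (\<Sum>i. pf (A i)) + (\<Sum>i. nf (A i))"
    by (rule suminf_add[symmetric]) auto
  also have "\<dots> = pf (\<Union>i. A i) + nf (\<Union>i. A i)"
    using pf_ca nf_ca A unfolding countably_additive_def by simp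
  finally show "(\<Sum>i. pf (A i) + nf (A i)) = pf (\<Union>i. A i) + nf (\<Union>i. A i)" .
qed

lemma emeasure_var: "A \<in> sets M \<Longrightarrow> emeasure (sm_var M R \<nu>) A = pf A + nf A"
proof -
  assume A: "A \<in> sets M"
  have pos: "positive (sets M) vf" unfolding positive_def vf_eq
    using pf_empty jset.pf_empty[OF jset_neg] nf_pf by simp
  have "emeasure (sm_var M R \<nu>) A = vf A"
    unfolding sm_var_def vf_def[symmetric]
    using emeasure_measure_of_sigma[OF sets.sigma_algebra_axioms pos vf_ca] A by blast
  then show ?thesis by (simp add: vf_eq)
qed

lemma sets_var[simp]: "sets (sm_var M R \<nu>) = sets M"
  unfolding sm_var_def using sets.sets_into_space by (subst sets_measure_of) (auto simp: sets.sigma_sets_eq)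

lemma space_var[simp]: "space (sm_var M R \<nu>) = space M"
  unfolding sm_var_def by simp

lemma emeasure_neg: "A \<in> sets M \<Longrightarrow> emeasure (sm_neg M R \<nu>) A = nf A"
  unfolding sm_neg_eq nf_pf by (rule jset.emeasure_pos[OF jset_neg])

lemma sets_neg[simp]: "sets (sm_neg M R \<nu>) = sets M"
  unfolding sm_neg_eq by (rule jset.sets_pos[OF jset_neg])

lemma space_neg[simp]: "space (sm_neg M R \<nu>) = space M"
  unfolding sm_neg_eq by (rule jset.space_pos[OF jset_neg])

lemma nf_finite: "B \<in> R \<Longrightarrow> nf B < \<infinity>"
  unfolding nf_pf by (rule jset.pf_finite[OF jset_neg])

end




locale ms =
  fixes M :: "'a measure" and X :: "('a \<Rightarrow> real) set" and T :: "('a \<Rightarrow> real) \<Rightarrow> 'b::banach"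
    and \<xi> :: "'a measure" and Z :: "('a \<Rightarrow> real) set" and nZ and S :: "('a \<Rightarrow> real) \<Rightarrow> 'b"
  assumes X: "ideal_fs M X" and sp: "sigma_property M X"
  and sx: "sets \<xi> = sets M" and qZ: "qbfs \<xi> Z nZ" and soZ: "sigma_order_cont \<xi> Z nZ"
  and XZ: "X \<subseteq> Z" and S: "cont_lin_op Z nZ S" and TS: "\<forall>f\<in>X. T f = S f"
begin

lemma spx: "space \<xi> = space M" using sx by (rule sets_eq_imp_space_eq)

lemma measx: "borel_measurable \<xi> = borel_measurable M" using sx by (rule measurable_cong_sets) simp

lemma X_meas: "f \<in> X \<Longrightarrow> f \<in> borel_measurable M" using X unfolding ideal_fs_def by blast
lemma X_add: "f \<in> X \<Longrightarrow> g \<in> X \<Longrightarrow> (\<lambda>x. f x + g x) \<in> X" using X unfolding ideal_fs_def by blast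
lemma X_scale: "f \<in> X \<Longrightarrow> (\<lambda>x. c * f x) \<in> X" using X unfolding ideal_fs_def by blast
lemma X_zero: "(\<lambda>x. 0) \<in> X" using X unfolding ideal_fs_def by blast
lemma X_dom: "f \<in> X \<Longrightarrow> g \<in> borel_measurable M \<Longrightarrow> (\<And>x. x \<in> space M \<Longrightarrow> \<bar>g x\<bar> \<le> \<bar>f x\<bar>) \<Longrightarrow> g \<in> X"
  using X unfolding ideal_fs_def by (metis (no_types, lifting) AE_I2)

lemma Z_ideal: "ideal_fs \<xi> Z" using qZ unfolding qbfs_def by blast
lemma Z_meas: "f \<in> Z \<Longrightarrow> f \<in> borel_measurable M" using Z_ideal measx unfolding ideal_fs_def by blast
lemma Z_add: "f \<in> Z \<Longrightarrow> g \<in> Z \<Longrightarrow> (\<lambda>x. f x + g x) \<in> Z" using Z_ideal unfolding ideal_fs_def by blast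
lemma Z_scale: "f \<in> Z \<Longrightarrow> (\<lambda>x. c * f x) \<in> Z" using Z_ideal unfolding ideal_fs_def by blast
lemma Z_zero: "(\<lambda>x. 0) \<in> Z" using Z_ideal unfolding ideal_fs_def by blast
lemma Z_dom: "f \<in> Z \<Longrightarrow> g \<in> borel_measurable M \<Longrightarrow> (\<And>x. x \<in> space M \<Longrightarrow> \<bar>g x\<bar> \<le> \<bar>f x\<bar>) \<Longrightarrow> g \<in> Z"
proof -
  assume a: "f \<in> Z" "g \<in> borel_measurable M" "\<And>x. x \<in> space M \<Longrightarrow> \<bar>g x\<bar> \<le> \<bar>f x\<bar>"
  have "AE x in \<xi>. \<bar>g x\<bar> \<le> \<bar>f x\<bar>" using a(3) spx by (intro AE_I2) simp
  then show "g \<in> Z" using Z_ideal a measx unfolding ideal_fs_def by blast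
qed

lemma nZ_nonneg: "f \<in> Z \<Longrightarrow> 0 \<le> nZ f" using qZ unfolding qbfs_def by blast
lemma nZ_zero: "f \<in> Z \<Longrightarrow> (AE x in \<xi>. f x = 0) \<Longrightarrow> nZ f = 0" using qZ unfolding qbfs_def by blast
lemma nZ_hom: "f \<in> Z \<Longrightarrow> nZ (\<lambda>x. c * f x) = \<bar>c\<bar> * nZ f" using qZ unfolding qbfs_def by blast
lemma nZ_mono: "f \<in> Z \<Longrightarrow> g \<in> Z \<Longrightarrow> (\<And>x. x \<in> space M \<Longrightarrow> \<bar>f x\<bar> \<le> \<bar>g x\<bar>) \<Longrightarrow> nZ f \<le> nZ g"
proof -
  assume a: "f \<in> Z" "g \<in> Z" "\<And>x. x \<in> space M \<Longrightarrow> \<bar>f x\<bar> \<le> \<bar>g x\<bar>"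
  have "AE x in \<xi>. \<bar>f x\<bar> \<le> \<bar>g x\<bar>" using a(3) spx by (intro AE_I2) simp
  then show ?thesis using qZ a unfolding qbfs_def by blast
qed

lemma S_add: "f \<in> Z \<Longrightarrow> g \<in> Z \<Longrightarrow> S (\<lambda>x. f x + g x) = S f + S g" using S unfolding cont_lin_op_def by blast
lemma S_scale: "f \<in> Z \<Longrightarrow> S (\<lambda>x. c * f x) = c *\<^sub>R S f" using S unfolding cont_lin_op_def by blast
lemma S_cont: "f \<in> Z \<Longrightarrow> e > 0 \<Longrightarrow> \<exists>d>0. \<forall>g\<in>Z. nZ (\<lambda>x. g x - f x) < d \<longrightarrow> dist (S g) (S f) < e"
  using S unfolding cont_lin_op_def by blast

lemma S_zero: "S (\<lambda>x. 0) = 0"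
  using S_scale[OF Z_zero, of 0] by simp

lemma S_bound: "\<exists>C>0. \<forall>h\<in>Z. norm (S h) \<le> C * nZ h"
proof -
  obtain d where d: "d > 0" "\<And>g. g \<in> Z \<Longrightarrow> nZ (\<lambda>x. g x - 0) < d \<Longrightarrow> dist (S g) (S (\<lambda>x. 0)) < 1"
    using S_cont[OF Z_zero, of 1] by auto
  have d': "norm (S g) < 1" if "g \<in> Z" "nZ g < d" for g using d(2)[OF that(1)] that S_zero by simp
  have "norm (S h) \<le> (2/d) * nZ h" if h: "h \<in> Z" for h
  proof (cases "nZ h = 0")
    case True
    have "norm (S h) \<le> e" if e: "e > 0" for e
    proof -
      have "nZ (\<lambda>x. (1/e) * h x) = \<bar>1/e\<bar> * nZ h" by (rule nZ_hom[OF h])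
      then have "nZ (\<lambda>x. (1/e) * h x) = 0" using True by simp
      then have "norm (S (\<lambda>x. (1/e) * h x)) < 1" by (intro d'[OF Z_scale[OF h]]) (use d(1) in simp)
      moreover have eqS: "S (\<lambda>x. (1/e) * h x) = (1/e) *\<^sub>R S h" by (rule S_scale[OF h])
      ultimately have "norm ((1/e) *\<^sub>R S h) < 1" by (simp only:)
      then have "(1/e) * norm (S h) < 1" using e by simp
      then show ?thesis using e by (simp add: field_simps)
    qed
    then have "norm (S h) = 0" by (metis dense_ge norm_ge_zero order_antisym)
    then show ?thesis using True by simp
  next
    case False
    then have r: "nZ h > 0" using nZ_nonneg[OF h] by simp
    define c where "c = 2 * nZ h / d"
    have c: "c > 0" using r d(1) c_def by simp
    have "nZ (\<lambda>x. (1/c) * h x) = \<bar>1/c\<bar> * nZ h" by (rule nZ_hom[OF h])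
    also have "\<dots> = d / 2" using c r d(1) unfolding c_def by (simp add: field_simps abs_of_pos)
    finally have "nZ (\<lambda>x. (1/c) * h x) = d / 2" .
    then have "norm (S (\<lambda>x. (1/c) * h x)) < 1" by (intro d'[OF Z_scale[OF h]]) (use d(1) in simp)
    moreover have eqS: "S (\<lambda>x. (1/c) * h x) = (1/c) *\<^sub>R S h" by (rule S_scale[OF h])
    ultimately have "norm ((1/c) *\<^sub>R S h) < 1" by (simp only:)
    then have "(1/c) * norm (S h) < 1" using c by simp
    then have "norm (S h) < c" using c by (simp add: field_simps)
    then show ?thesis unfolding c_def by simp
  qed
  moreover have "2/d > 0" using d by simp
  ultimately show ?thesis by blast
qed

definition "CS = (SOME C. C > 0 \<and> (\<forall>h\<in>Z. norm (S h) \<le> C * nZ h))"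
lemma CS: "CS > 0" "h \<in> Z \<Longrightarrow> norm (S h) \<le> CS * nZ h"
  using someI_ex[OF S_bound] unfolding CS_def by blast+

lemma S_ae: "h \<in> Z \<Longrightarrow> (AE x in \<xi>. h x = 0) \<Longrightarrow> S h = 0"
  using CS(2)[of h] nZ_zero[of h] by simp

lemma S_lim:
  assumes u: "\<And>n. u n \<in> Z" and v: "v \<in> Z"
    and inc: "\<And>x. x \<in> space M \<Longrightarrow> incseq (\<lambda>n. u n x)"
    and lim: "\<And>x. x \<in> space M \<Longrightarrow> (\<lambda>n. u n x) \<longlonglongrightarrow> v x"
  shows "(\<lambda>n. S (u n)) \<longlonglongrightarrow> S v"
proof -
  define w where "w n = (\<lambda>x. v x - u n x)" for n
  have wZ: "w n \<in> Z" for n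
  proof -
    have "(\<lambda>x. v x + (-1) * u n x) \<in> Z" using Z_add[OF v Z_scale[OF u]] .
    then show ?thesis unfolding w_def by simp
  qed
  have "AE x in \<xi>. decseq (\<lambda>n. w n x) \<and> (\<lambda>n. w n x) \<longlonglongrightarrow> 0"
  proof (rule AE_I2)
    fix x assume "x \<in> space \<xi>"
    then have x: "x \<in> space M" using spx by simp
    have "decseq (\<lambda>n. w n x)" using inc[OF x] unfolding w_def incseq_def decseq_def by simp
    moreover have "(\<lambda>n. w n x) \<longlonglongrightarrow> 0"
      using tendsto_diff[OF tendsto_const[of "v x"] lim[OF x]] unfolding w_def by simp
    ultimately show "decseq (\<lambda>n. w n x) \<and> (\<lambda>n. w n x) \<longlonglongrightarrow> 0" ..
  qed
  then have nw: "(\<lambda>n. nZ (w n)) \<longlonglongrightarrow> 0" using soZ wZ unfolding sigma_order_cont_def by blast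
  have eqn: "nZ (\<lambda>x. u n x - v x) = nZ (w n)" for n
  proof -
    have "nZ (\<lambda>x. (-1) * w n x) = nZ (w n)" using nZ_hom[OF wZ, where c="-1"] by simp
    moreover have "(\<lambda>x. (-1) * w n x) = (\<lambda>x. u n x - v x)" unfolding w_def by (simp add: fun_eq_iff)
    ultimately show ?thesis by simp
  qed
  show ?thesis
  proof (rule metric_LIMSEQ_I)
    fix e :: real assume e: "e > 0"
    obtain d where d: "d > 0" "\<And>g. g \<in> Z \<Longrightarrow> nZ (\<lambda>x. g x - v x) < d \<Longrightarrow> dist (S g) (S v) < e"
      using S_cont[OF v e] by blast
    obtain N where N: "\<And>n. n \<ge> N \<Longrightarrow> dist (nZ (w n)) 0 < d" using metric_LIMSEQ_D[OF nw d(1)] by blast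
    have "dist (S (u n)) (S v) < e" if "n \<ge> N" for n
    proof (rule d(2)[OF u])
      have "nZ (w n) < d" using N[OF that] nZ_nonneg[OF wZ] by simp
      then show "nZ (\<lambda>x. u n x - v x) < d" using eqn by simp
    qed
    then show "\<exists>no. \<forall>n\<ge>no. dist (S (u n)) (S v) < e" by blast
  qed
qed


abbreviation "R \<equiv> SigmaX M X"
definition nu :: "('b \<Rightarrow>\<^sub>L real) \<Rightarrow> 'a set \<Rightarrow> real" where "nu x' = (\<lambda>B. blinfun_apply x' (mT T B))"

lemma R_sets: "R \<subseteq> sets M" unfolding SigmaX_def by blast
lemma R_ind: "B \<in> R \<Longrightarrow> indicator B \<in> X" unfolding SigmaX_def by blast
lemma R_I: "B \<in> sets M \<Longrightarrow> indicator B \<in> X \<Longrightarrow> B \<in> R" unfolding SigmaX_def by blast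
lemma R_empty: "{} \<in> R"
proof -
  have e: "indicator {} = (\<lambda>x. 0::real)" by (simp add: fun_eq_iff)
  show ?thesis by (rule R_I) (simp_all only: e X_zero sets.empty_sets)
qed
lemma R_her: "B \<in> R \<Longrightarrow> C \<in> sets M \<Longrightarrow> C \<subseteq> B \<Longrightarrow> C \<in> R"
proof -
  assume a: "B \<in> R" "C \<in> sets M" "C \<subseteq> B"
  have "indicator C \<in> X"
    by (rule X_dom[OF R_ind[OF a(1)]]) (use a in \<open>auto simp: indicator_def\<close>)
  then show ?thesis using a by (intro R_I)
qed
lemma R_un: "B \<in> R \<Longrightarrow> C \<in> R \<Longrightarrow> B \<union> C \<in> R"
proof -
  assume a: "B \<in> R" "C \<in> R"
  have s: "B \<in> sets M" "C \<in> sets M" using a R_sets by auto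
  have "indicator (B \<union> C) \<in> X"
    by (rule X_dom[OF X_add[OF R_ind[OF a(1)] R_ind[OF a(2)]]]) (use s in \<open>auto simp: indicator_def\<close>)
  then show ?thesis using s by (intro R_I) auto
qed

lemma T_ind: "B \<in> R \<Longrightarrow> T (indicator B) = S (indicator B)" using TS R_ind by blast
lemma R_Z: "B \<in> R \<Longrightarrow> indicator B \<in> Z" using XZ R_ind by blast

lemma S_ind_add: "B \<in> R \<Longrightarrow> C \<in> R \<Longrightarrow> B \<inter> C = {} \<Longrightarrow> S (indicator (B \<union> C)) = S (indicator B) + S (indicator C)"
proof -
  assume a: "B \<in> R" "C \<in> R" "B \<inter> C = {}"
  have "indicator (B \<union> C) = (\<lambda>x. indicator B x + indicator C x :: real)"
    using a(3) by (auto simp: fun_eq_iff indicator_def)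
  then show ?thesis using S_add[OF R_Z[OF a(1)] R_Z[OF a(2)]] by simp
qed

lemma nu_eq: "B \<in> R \<Longrightarrow> nu x' B = blinfun_apply x' (S (indicator B))"
  unfolding nu_def mT_def using T_ind by simp

lemma nu_neg: "nu (- x') = (\<lambda>B. - nu x' B)"
  unfolding nu_def by (simp add: fun_eq_iff blinfun.minus_left)

lemma jset_nu: "jset M R (nu x')"
proof
  show "R \<subseteq> sets M" by (rule R_sets)
  show "{} \<in> R" by (rule R_empty)
  show "\<And>B C. B \<in> R \<Longrightarrow> C \<in> sets M \<Longrightarrow> C \<subseteq> B \<Longrightarrow> C \<in> R" by (rule R_her)
  show "\<And>B C. B \<in> R \<Longrightarrow> C \<in> R \<Longrightarrow> B \<union> C \<in> R" by (rule R_un)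
  show "nu x' (B \<union> C) = nu x' B + nu x' C" if "B \<in> R" "C \<in> R" "B \<inter> C = {}" for B C
  proof -
    have "nu x' (B \<union> C) = blinfun_apply x' (S (indicator (B \<union> C)))" by (rule nu_eq) (rule R_un[OF that(1,2)])
    also have "\<dots> = blinfun_apply x' (S (indicator B)) + blinfun_apply x' (S (indicator C))"
      by (simp add: S_ind_add[OF that] blinfun.add_right)
    also have "\<dots> = nu x' B + nu x' C" by (simp only: nu_eq[OF that(1)] nu_eq[OF that(2)])
    finally show ?thesis .
  qed
next
  fix A :: "nat \<Rightarrow> 'a set"
  assume A: "range A \<subseteq> R" "disjoint_family A" "(\<Union>i. A i) \<in> R"
  define D where "D n = (\<Union>i<n. A i)" for n
  have DR: "D n \<in> R \<and> S (indicator (D n)) = (\<Sum>i<n. S (indicator (A i)))" for n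
  proof (induction n)
    case 0
    have "indicator {} = (\<lambda>x. 0::real)" by (simp add: fun_eq_iff)
    then show ?case using R_empty S_zero by (simp add: D_def)
  next
    case (Suc n)
    have e: "D (Suc n) = D n \<union> A n" unfolding D_def by (auto simp: lessThan_Suc)
    have d: "D n \<inter> A n = {}" unfolding D_def using A(2)
      by (auto simp: disjoint_family_on_def) (metis disjoint_iff less_irrefl_nat)
    have An: "A n \<in> R" using A by blast
    show ?case using Suc e d An R_un S_ind_add[of "D n" "A n"] by simp
  qed
  have inc: "incseq D" unfolding D_def incseq_def by (auto simp: subset_eq)
  have UD: "(\<Union>n. D n) = (\<Union>i. A i)" unfolding D_def by blast
  have lim: "(\<lambda>n. S (indicator (D n))) \<longlonglongrightarrow> S (indicator (\<Union>i. A i))"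
  proof (rule S_lim)
    show "indicator (D n) \<in> Z" for n using DR R_Z by blast
    show "indicator (\<Union>i. A i) \<in> Z" using A(3) R_Z by blast
    show "incseq (\<lambda>n. indicator (D n) x :: real)" for x
      using inc by (auto simp: incseq_def indicator_def subset_eq)
    show "(\<lambda>n. indicator (D n) x :: real) \<longlonglongrightarrow> indicator (\<Union>i. A i) x" for x
      using LIMSEQ_indicator_incseq[OF inc, of x] UD by simp
  qed
  have "(\<lambda>n. blinfun_apply x' (S (indicator (D n)))) \<longlonglongrightarrow> blinfun_apply x' (S (indicator (\<Union>i. A i)))"
    by (rule blinfun.tendsto[OF tendsto_const lim])
  moreover have "blinfun_apply x' (S (indicator (D n))) = (\<Sum>i<n. nu x' (A i))" for n
  proof -
    have AR: "\<And>i. A i \<in> R" using A(1) by blast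
    show ?thesis using DR[of n] by (simp add: blinfun.sum_right nu_eq[OF AR])
  qed
  ultimately have "(\<lambda>n. \<Sum>i<n. nu x' (A i)) \<longlonglongrightarrow> blinfun_apply x' (S (indicator (\<Union>i. A i)))" by simp
  then show "(\<lambda>i. nu x' (A i)) sums nu x' (\<Union>i. A i)"
    unfolding sums_def nu_eq[OF A(3)] .
next
  fix B assume B: "B \<in> R"
  show "\<exists>K. \<forall>C\<in>R. C \<subseteq> B \<longrightarrow> \<bar>nu x' C\<bar> \<le> K"
  proof (intro exI ballI impI)
    fix C assume C: "C \<in> R" "C \<subseteq> B"
    have "\<bar>nu x' C\<bar> = \<bar>blinfun_apply x' (S (indicator C))\<bar>" by (simp only: nu_eq[OF C(1)])
    also have "\<dots> \<le> norm x' * norm (S (indicator C))" using norm_blinfun[of x' "S (indicator C)"] by simp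
    also have "\<dots> \<le> norm x' * (CS * nZ (indicator C))" by (intro mult_left_mono CS(2) R_Z C) simp
    also have "\<dots> \<le> norm x' * (CS * nZ (indicator B))"
      by (intro mult_left_mono nZ_mono R_Z C B) (use C CS(1) in \<open>auto simp: indicator_def\<close>)
    finally show "\<bar>nu x' C\<bar> \<le> norm x' * (CS * nZ (indicator B))" .
  qed
qed


abbreviation "P x' \<equiv> sm_pos M R (nu x')"

lemma sets_P[simp]: "sets (P x') = sets M" by (rule jset.sets_pos[OF jset_nu])
lemma space_P[simp]: "space (P x') = space M" by (rule jset.space_pos[OF jset_nu])
lemma meas_P: "borel_measurable (P x') = borel_measurable M" by (rule measurable_cong_sets) simp_all
lemma meas_P': "f \<in> borel_measurable M \<Longrightarrow> f \<in> borel_measurable (P x')" using meas_P by blast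

lemma neg_P: "sm_neg M R (nu x') = P (- x')"
  unfolding jset.sm_neg_eq[OF jset_nu] nu_neg ..

lemma emeasure_P: "A \<in> sets M \<Longrightarrow> emeasure (P x') A = jset.pf R (nu x') A"
  by (rule jset.emeasure_pos[OF jset_nu])

lemma nf_nu: "jset.nf R (nu x') = jset.pf R (nu (- x'))"
  unfolding jset.nf_pf[OF jset_nu] nu_neg ..

lemma emeasure_V: "A \<in> sets M \<Longrightarrow> emeasure (sm_var M R (nu x')) A = emeasure (P x') A + emeasure (P (-x')) A"
  using jset.emeasure_var[OF jset_nu] emeasure_P nf_nu by simp

lemma sets_V[simp]: "sets (sm_var M R (nu x')) = sets M" by (rule jset.sets_var[OF jset_nu])
lemma space_V[simp]: "space (sm_var M R (nu x')) = space M" by (rule jset.space_var[OF jset_nu])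

lemma nn_V: "f \<in> borel_measurable M \<Longrightarrow> (\<integral>\<^sup>+x. f x \<partial>sm_var M R (nu x')) = (\<integral>\<^sup>+x. f x \<partial>P x') + (\<integral>\<^sup>+x. f x \<partial>P (-x'))"
  by (rule nn_integral_sum_meas[OF sets_V sets_P sets_P emeasure_V])

lemma base:
  assumes B: "B \<in> R"
  shows "emeasure (P x') B < \<infinity>" "blinfun_apply x' (S (indicator B)) = measure (P x') B - measure (P (-x')) B"
proof -
  have Bs: "B \<in> sets M" using B R_sets by blast
  show "emeasure (P x') B < \<infinity>" using emeasure_P[OF Bs] jset.pf_finite[OF jset_nu B] by simp
  have "blinfun_apply x' (S (indicator B)) = nu x' B" using nu_eq[OF B] by simp
  also have "\<dots> = enn2real (jset.pf R (nu x') B) - enn2real (jset.nf R (nu x') B)"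
    using jset.jordan[OF jset_nu B] by simp
  also have "\<dots> = measure (P x') B - measure (P (-x')) B"
    unfolding measure_def using emeasure_P[OF Bs] nf_nu by simp
  finally show "blinfun_apply x' (S (indicator B)) = measure (P x') B - measure (P (-x')) B" .
qed

definition "H u = {h. h \<in> X \<and> (\<forall>x\<in>space M. 0 \<le> h x \<and> h x \<le> u x)}"
definition "Bd x' u = (SUP h\<in>H u. ennreal (blinfun_apply x' (S h)))"

lemma H_zero: "(\<lambda>x. 0) \<in> H u" if "\<And>x. 0 \<le> u x" unfolding H_def using X_zero that by auto

lemma Bd_add:
  assumes h1: "h1 \<in> H v" and h2: "h2 \<in> H u"
  shows "ennreal (blinfun_apply x' (S h1)) + ennreal (blinfun_apply x' (S h2)) \<le> Bd x' (\<lambda>x. v x + u x)"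
proof -
  define h1' where "h1' = (if 0 \<le> blinfun_apply x' (S h1) then h1 else (\<lambda>x. 0))"
  define h2' where "h2' = (if 0 \<le> blinfun_apply x' (S h2) then h2 else (\<lambda>x. 0))"
  have vu: "\<forall>x\<in>space M. 0 \<le> v x" "\<forall>x\<in>space M. 0 \<le> u x" using h1 h2 unfolding H_def by force+
  have H1: "h1' \<in> H v" using h1 vu X_zero unfolding h1'_def H_def by auto
  have H2: "h2' \<in> H u" using h2 vu X_zero unfolding h2'_def H_def by auto
  have e1: "ennreal (blinfun_apply x' (S h1)) = ennreal (blinfun_apply x' (S h1'))" "0 \<le> blinfun_apply x' (S h1')"
    unfolding h1'_def using S_zero by (auto simp: ennreal_neg)
  have e2: "ennreal (blinfun_apply x' (S h2)) = ennreal (blinfun_apply x' (S h2'))" "0 \<le> blinfun_apply x' (S h2')"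
    unfolding h2'_def using S_zero by (auto simp: ennreal_neg)
  have X1: "h1' \<in> X" "h2' \<in> X" using H1 H2 unfolding H_def by auto
  have Hs: "(\<lambda>x. h1' x + h2' x) \<in> H (\<lambda>x. v x + u x)" using H1 H2 X_add[OF X1] unfolding H_def
    by (auto intro: add_mono)
  have "ennreal (blinfun_apply x' (S h1)) + ennreal (blinfun_apply x' (S h2))
     = ennreal (blinfun_apply x' (S (\<lambda>x. h1' x + h2' x)))"
    using e1 e2 S_add[OF XZ[THEN subsetD, OF X1(1)] XZ[THEN subsetD, OF X1(2)]]
    by (simp add: blinfun.add_right ennreal_plus[symmetric] del: ennreal_plus)
  also have "\<dots> \<le> Bd x' (\<lambda>x. v x + u x)" unfolding Bd_def by (rule SUP_upper[OF Hs])
  finally show ?thesis .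
qed

lemma bound:
  assumes u: "u \<in> borel_measurable M" and nn: "\<And>x. 0 \<le> u x"
  shows "(\<integral>\<^sup>+x. ennreal (u x) \<partial>P x') \<le> Bd x' u"
  using u nn
proof (induction u rule: borel_measurable_induct_real)
  case (set A)
  have "(\<integral>\<^sup>+x. ennreal (indicator A x) \<partial>P x') = emeasure (P x') A"
    using set by (simp add: ennreal_indicator)
  also have "\<dots> = (SUP B\<in>{B \<in> R. B \<subseteq> A}. ennreal (nu x' B))"
    using emeasure_P[OF set] jset.pf_def[OF jset_nu] by simp
  also have "\<dots> \<le> Bd x' (indicator A)" unfolding Bd_def
  proof (rule SUP_mono)
    fix B assume B: "B \<in> {B \<in> R. B \<subseteq> A}"
    have "indicator B \<in> H (indicator A)" unfolding H_def using B R_ind by (auto simp: indicator_def)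
    moreover have "ennreal (nu x' B) \<le> ennreal (blinfun_apply x' (S (indicator B)))"
      using nu_eq[of B x'] B by simp
    ultimately show "\<exists>h\<in>H (indicator A). ennreal (nu x' B) \<le> ennreal (blinfun_apply x' (S h))" by blast
  qed
  finally show ?case .
next
  case (mult u c)
  have "(\<integral>\<^sup>+x. ennreal (c * u x) \<partial>P x') = ennreal c * (\<integral>\<^sup>+x. ennreal (u x) \<partial>P x')"
  proof -
    have "(\<lambda>x. ennreal (u x)) \<in> borel_measurable M" using mult(2) by measurable
    then have m: "(\<lambda>x. ennreal (u x)) \<in> borel_measurable (P x')" by (rule meas_P')
    show ?thesis using nn_integral_cmult[OF m, of "ennreal c"] mult(1) by (simp add: ennreal_mult')
  qed
  also have "\<dots> \<le> ennreal c * Bd x' u" using mult by (intro mult_left_mono) auto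
  also have "\<dots> = (SUP h\<in>H u. ennreal c * ennreal (blinfun_apply x' (S h)))"
    unfolding Bd_def by (rule SUP_mult_left_ennreal)
  also have "\<dots> \<le> Bd x' (\<lambda>x. c * u x)" unfolding Bd_def
  proof (rule SUP_mono)
    fix h assume h: "h \<in> H u"
    have hX: "h \<in> X" using h H_def by auto
    have "(\<lambda>x. c * h x) \<in> H (\<lambda>x. c * u x)" using h X_scale[OF hX] mult(1) unfolding H_def
      by (auto intro: mult_left_mono)
    moreover have "ennreal c * ennreal (blinfun_apply x' (S h)) = ennreal (blinfun_apply x' (S (\<lambda>x. c * h x)))"
      using S_scale[OF XZ[THEN subsetD, OF hX]] mult(1) by (simp add: blinfun.scaleR_right ennreal_mult')
    ultimately show "\<exists>m\<in>H (\<lambda>x. c * u x). ennreal c * ennreal (blinfun_apply x' (S h)) \<le> ennreal (blinfun_apply x' (S m))"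
      by (metis order_refl)
  qed
  finally show ?case .
next
  case (add u v)
  have "(\<integral>\<^sup>+x. ennreal (v x + u x) \<partial>P x') = (\<integral>\<^sup>+x. ennreal (v x) \<partial>P x') + (\<integral>\<^sup>+x. ennreal (u x) \<partial>P x')"
  proof -
    have "(\<lambda>x. ennreal (u x)) \<in> borel_measurable M" "(\<lambda>x. ennreal (v x)) \<in> borel_measurable M"
      using add by measurable
    have m: "(\<lambda>x. ennreal (u x)) \<in> borel_measurable (P x')" "(\<lambda>x. ennreal (v x)) \<in> borel_measurable (P x')"
      unfolding meas_P using add by measurable
    show ?thesis using nn_integral_add[OF m(2) m(1)] add by simp
  qed
  also have "\<dots> \<le> Bd x' v + Bd x' u" using add by (intro add_mono) auto
  also have "\<dots> \<le> Bd x' (\<lambda>x. v x + u x)"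
  proof -
    have ne: "H v \<noteq> {}" "H u \<noteq> {}" using H_zero add by blast+
    have "Bd x' v + Bd x' u = (SUP h1\<in>H v. ennreal (blinfun_apply x' (S h1)) + Bd x' u)"
      unfolding Bd_def[of x' v] by (rule ennreal_SUP_add_left[symmetric, OF ne(1)])
    also have "\<dots> \<le> Bd x' (\<lambda>x. v x + u x)"
    proof (rule SUP_least)
      fix h1 assume h1: "h1 \<in> H v"
      have "ennreal (blinfun_apply x' (S h1)) + Bd x' u = Bd x' u + ennreal (blinfun_apply x' (S h1))"
        by (simp add: add.commute)
      also have "\<dots> = (SUP h2\<in>H u. ennreal (blinfun_apply x' (S h2)) + ennreal (blinfun_apply x' (S h1)))"
        unfolding Bd_def[of x' u] by (rule ennreal_SUP_add_left[symmetric, OF ne(2)])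
      also have "\<dots> \<le> Bd x' (\<lambda>x. v x + u x)"
        by (rule SUP_least) (use Bd_add[OF h1] in \<open>simp add: add.commute\<close>)
      finally show "ennreal (blinfun_apply x' (S h1)) + Bd x' u \<le> Bd x' (\<lambda>x. v x + u x)" .
    qed
    finally show ?thesis .
  qed
  finally show ?case .
next
  case (seq U)
  have sinc: "incseq U" by fact
  have slim: "\<And>x. x \<in> space M \<Longrightarrow> (\<lambda>i. U i x) \<longlonglongrightarrow> u x" by fact
  have smeas: "\<And>i. U i \<in> borel_measurable M" by fact
  have sIH: "\<And>i. (\<integral>\<^sup>+x. ennreal (U i x) \<partial>P x') \<le> Bd x' (U i)" by fact
  have le: "U i x \<le> u x" if "x \<in> space M" for i x
  proof -
    have "incseq (\<lambda>i. U i x)" using sinc by (auto simp: incseq_def le_fun_def)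
    from incseq_le[OF this slim[OF that]] show ?thesis .
  qed
  have incE: "incseq (\<lambda>i x. ennreal (U i x))" using sinc by (auto simp: incseq_def le_fun_def intro!: ennreal_leI)
  have eqs: "ennreal (u x) = (SUP i. ennreal (U i x))" if "x \<in> space M" for x
  proof -
    have inc: "incseq (\<lambda>i. ennreal (U i x))" using incE by (auto simp: incseq_def le_fun_def)
    have "(\<lambda>i. ennreal (U i x)) \<longlonglongrightarrow> ennreal (u x)" by (rule tendsto_ennrealI[OF slim[OF that]])
    moreover have "(\<lambda>i. ennreal (U i x)) \<longlonglongrightarrow> (SUP i. ennreal (U i x))" by (rule LIMSEQ_SUP[OF inc])
    ultimately show ?thesis by (rule LIMSEQ_unique)
  qed
  have "(\<integral>\<^sup>+x. ennreal (u x) \<partial>P x') = (\<integral>\<^sup>+x. (SUP i. ennreal (U i x)) \<partial>P x')"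
    by (rule nn_integral_cong) (simp add: eqs)
  also have "\<dots> = (SUP i. \<integral>\<^sup>+x. ennreal (U i x) \<partial>P x')"
    by (rule nn_integral_monotone_convergence_SUP[OF incE]) (unfold meas_P, use smeas in measurable)
  also have "\<dots> \<le> (SUP i. Bd x' (U i))" by (rule SUP_mono') (rule sIH)
  also have "\<dots> \<le> Bd x' u"
  proof (rule SUP_least)
    fix i
    have "H (U i) \<subseteq> H u" unfolding H_def using le by (auto intro: order_trans)
    then show "Bd x' (U i) \<le> Bd x' u" unfolding Bd_def by (rule SUP_subset_mono) simp
  qed
  finally show ?case .
qed

lemma Bd_fin:
  assumes u: "u \<in> Z" "\<And>x. 0 \<le> u x"
  shows "Bd x' u \<le> ennreal (norm x' * (CS * nZ u))"
  unfolding Bd_def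
proof (rule SUP_least)
  fix h assume h: "h \<in> H u"
  have hZ: "h \<in> Z" using h XZ unfolding H_def by auto
  have "blinfun_apply x' (S h) \<le> norm x' * norm (S h)" using norm_blinfun[of x' "S h"] by simp
  also have "\<dots> \<le> norm x' * (CS * nZ h)" by (intro mult_left_mono CS(2) hZ) simp
  also have "\<dots> \<le> norm x' * (CS * nZ u)"
    by (intro mult_left_mono nZ_mono hZ u(1)) (use h u(2) CS(1) H_def in auto)
  finally show "ennreal (blinfun_apply x' (S h)) \<le> ennreal (norm x' * (CS * nZ u))" by (rule ennreal_leI)
qed

lemma fin_Z:
  assumes u: "u \<in> Z" "\<And>x. 0 \<le> u x"
  shows "(\<integral>\<^sup>+x. ennreal (u x) \<partial>P x') < \<infinity>" "integrable (P x') u"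
proof -
  have "(\<integral>\<^sup>+x. ennreal (u x) \<partial>P x') \<le> ennreal (norm x' * (CS * nZ u))"
    using bound[OF Z_meas[OF u(1)] u(2)] Bd_fin[OF u] by (rule order_trans)
  then show fin: "(\<integral>\<^sup>+x. ennreal (u x) \<partial>P x') < \<infinity>" using le_less_trans by fastforce
  show "integrable (P x') u" unfolding integrable_iff_bounded
    using fin meas_P'[OF Z_meas[OF u(1)]] u(2) by simp
qed


definition "idt x' u \<longleftrightarrow> blinfun_apply x' (S u) = integral\<^sup>L (P x') u - integral\<^sup>L (P (-x')) u"

lemma ID_lim:
  assumes u: "\<And>n. u n \<in> Z" "\<And>n x. 0 \<le> u n x" and v: "v \<in> Z" "\<And>x. 0 \<le> v x"
    and inc: "\<And>x. x \<in> space M \<Longrightarrow> incseq (\<lambda>n. u n x)"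
    and lim: "\<And>x. x \<in> space M \<Longrightarrow> (\<lambda>n. u n x) \<longlonglongrightarrow> v x"
    and id: "\<And>n. idt x' (u n)"
  shows "idt x' v"
proof -
  have l1: "(\<lambda>n. blinfun_apply x' (S (u n))) \<longlonglongrightarrow> blinfun_apply x' (S v)"
    by (rule blinfun.tendsto[OF tendsto_const S_lim[OF u(1) v(1) inc lim]])
  have dc: "(\<lambda>n. integral\<^sup>L (P y) (u n)) \<longlonglongrightarrow> integral\<^sup>L (P y) v" for y
  proof (rule integral_dominated_convergence[where w=v])
    show "v \<in> borel_measurable (P y)" using Z_meas[OF v(1)] meas_P' by blast
    show "u n \<in> borel_measurable (P y)" for n using Z_meas[OF u(1)] meas_P' by blast
    show "integrable (P y) v" by (rule fin_Z(2)[OF v])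
    show "AE x in P y. (\<lambda>n. u n x) \<longlonglongrightarrow> v x" using lim by (intro AE_I2) simp
    show "AE x in P y. norm (u n x) \<le> v x" for n
    proof (rule AE_I2)
      fix x assume "x \<in> space (P y)"
      then have x: "x \<in> space M" by simp
      show "norm (u n x) \<le> v x" using incseq_le[OF inc[OF x] lim[OF x]] u(2)[of n x] by simp
    qed
  qed
  have l2: "(\<lambda>n. integral\<^sup>L (P x') (u n) - integral\<^sup>L (P (-x')) (u n)) \<longlonglongrightarrow> integral\<^sup>L (P x') v - integral\<^sup>L (P (-x')) v"
    by (intro tendsto_diff dc)
  have "(\<lambda>n. blinfun_apply x' (S (u n))) = (\<lambda>n. integral\<^sup>L (P x') (u n) - integral\<^sup>L (P (-x')) (u n))"
    using id unfolding idt_def by simp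
  with l1 l2 show ?thesis unfolding idt_def using LIMSEQ_unique by metis
qed

lemma idt_R: "B \<in> R \<Longrightarrow> idt x' (indicator B)"
proof -
  assume B: "B \<in> R"
  have Bs: "B \<inter> space M = B" using B R_sets sets.sets_into_space by blast
  show ?thesis unfolding idt_def using base(2)[OF B, of x'] Bs by simp
qed

definition "V n = (\<Union>k\<le>n. (SOME \<Omega>::nat \<Rightarrow> 'a set. (\<forall>n. \<Omega> n \<in> sets M \<and> (indicator (\<Omega> n) :: 'a \<Rightarrow> real) \<in> X)
      \<and> (\<Union>n. \<Omega> n) = space M) k)"

lemma V_props: "V n \<in> R" "incseq V" "(\<Union>n. V n) = space M"
proof -
  define \<Omega> where "\<Omega> = (SOME \<Omega>::nat \<Rightarrow> 'a set. (\<forall>n. \<Omega> n \<in> sets M \<and> (indicator (\<Omega> n) :: 'a \<Rightarrow> real) \<in> X)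
      \<and> (\<Union>n. \<Omega> n) = space M)"
  have O: "(\<forall>n. \<Omega> n \<in> sets M \<and> (indicator (\<Omega> n) :: 'a \<Rightarrow> real) \<in> X) \<and> (\<Union>n. \<Omega> n) = space M"
    unfolding \<Omega>_def using sp unfolding sigma_property_def by (rule someI_ex)
  have Vd: "V n = (\<Union>k\<le>n. \<Omega> k)" for n unfolding V_def \<Omega>_def ..
  have OR: "\<Omega> k \<in> R" for k using O R_I by blast
  show "V n \<in> R"
  proof (induction n)
    case 0 then show ?case using OR Vd by simp
  next
    case (Suc n)
    have "V (Suc n) = V n \<union> \<Omega> (Suc n)" unfolding Vd by (auto simp: atMost_Suc)
    then show ?case using Suc OR R_un by simp
  qed
  show "incseq V" unfolding incseq_def Vd by (intro allI impI UN_mono) auto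
  show "(\<Union>n. V n) = space M"
  proof
    show "(\<Union>n. V n) \<subseteq> space M" unfolding Vd using O by blast
    show "space M \<subseteq> (\<Union>n. V n)"
    proof
      fix x assume "x \<in> space M"
      then obtain k where "x \<in> \<Omega> k" using O by blast
      then have "x \<in> V k" unfolding Vd by blast
      then show "x \<in> (\<Union>n. V n)" by blast
    qed
  qed
qed

lemma idt_nonneg:
  assumes u: "u \<in> Z" "\<And>x. 0 \<le> u x"
  shows "idt x' u"
proof -
  have um: "u \<in> borel_measurable M" by (rule Z_meas[OF u(1)])
  have "u \<in> Z \<longrightarrow> idt x' u"
    using um u(2)
  proof (induction u rule: borel_measurable_induct_real)
    case (set A)
    show ?case
    proof
      assume AZ: "indicator A \<in> Z"
      have AV: "A \<inter> V n \<in> R" for n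
        by (rule R_her[OF V_props(1)]) (use set V_props(1) R_sets in auto)
      show "idt x' (indicator A)"
      proof (rule ID_lim[where u="\<lambda>n. indicator (A \<inter> V n)"])
        show "indicator (A \<inter> V n) \<in> Z" for n using R_Z[OF AV] .
        show "0 \<le> (indicator (A \<inter> V n) x :: real)" for n x by simp
        show "indicator A \<in> Z" by fact
        show "0 \<le> (indicator A x :: real)" for x by simp
        have inc: "incseq (\<lambda>n. A \<inter> V n)" using V_props(2) by (auto simp: incseq_def)
        show "incseq (\<lambda>n. indicator (A \<inter> V n) x :: real)" for x
          using inc by (auto simp: incseq_def indicator_def subset_eq)
        show "(\<lambda>n. indicator (A \<inter> V n) x :: real) \<longlonglongrightarrow> indicator A x" if "x \<in> space M" for x
        proof -
          have "(\<Union>n. A \<inter> V n) = A \<inter> space M" using V_props(3) by blast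
          then show ?thesis using LIMSEQ_indicator_incseq[OF inc, of x] that by (simp add: indicator_def)
        qed
        show "idt x' (indicator (A \<inter> V n))" for n by (rule idt_R[OF AV])
      qed
    qed
  next
    case (mult u c)
    show ?case
    proof
      assume cu: "(\<lambda>x. c * u x) \<in> Z"
      show "idt x' (\<lambda>x. c * u x)"
      proof (cases "c = 0")
        case True
        then show ?thesis unfolding idt_def using S_zero by simp
      next
        case False
        have "(\<lambda>x. (1/c) * (c * u x)) \<in> Z" using Z_scale[OF cu] .
        then have uZ: "u \<in> Z" using False by simp
        have "idt x' u" using mult uZ by blast
        then have e0: "blinfun_apply x' (S u) = integral\<^sup>L (P x') u - integral\<^sup>L (P (-x')) u" unfolding idt_def .
        have e1: "blinfun_apply x' (S (\<lambda>x. c * u x)) = c * blinfun_apply x' (S u)"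
          using S_scale[OF uZ, of c] by (simp add: blinfun.scaleR_right)
        show ?thesis unfolding idt_def e1 e0 by (simp add: right_diff_distrib)
      qed
    qed
  next
    case (add u v)
    show ?case
    proof
      assume vu: "(\<lambda>x. v x + u x) \<in> Z"
      have nnu: "\<And>x. 0 \<le> u x" and nnv: "\<And>x. 0 \<le> v x" and mu: "u \<in> borel_measurable M"
        and mv: "v \<in> borel_measurable M" using add by auto
      have uZ: "u \<in> Z" by (rule Z_dom[OF vu mu]) (use nnu nnv in \<open>simp add: abs_of_nonneg add_nonneg_nonneg\<close>)
      have vZ: "v \<in> Z" by (rule Z_dom[OF vu mv]) (use nnu nnv in \<open>simp add: abs_of_nonneg add_nonneg_nonneg\<close>)
      have "idt x' u" "idt x' v" using add uZ vZ by blast+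
      then show "idt x' (\<lambda>x. v x + u x)" unfolding idt_def
        using S_add[OF vZ uZ] fin_Z(2)[OF uZ] fin_Z(2)[OF vZ] add
        by (simp add: blinfun.add_right)
    qed
  next
    case (seq U)
    have sinc: "incseq U" by fact
    have slim: "\<And>x. x \<in> space M \<Longrightarrow> (\<lambda>i. U i x) \<longlonglongrightarrow> u x" by fact
    have smeas: "\<And>i. U i \<in> borel_measurable M" by fact
    have snn: "\<And>i x. 0 \<le> U i x" by fact
    have sIH: "\<And>i. U i \<in> Z \<longrightarrow> idt x' (U i)" by fact
    show ?case
    proof
      assume uZ: "u \<in> Z"
      have incx: "incseq (\<lambda>i. U i x)" for x using sinc by (auto simp: incseq_def le_fun_def)
      have UZ: "U i \<in> Z" for i
      proof (rule Z_dom[OF uZ smeas])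
        fix x assume x: "x \<in> space M"
        have "U i x \<le> u x" using incseq_le[OF incx slim[OF x]] .
        then show "\<bar>U i x\<bar> \<le> \<bar>u x\<bar>" using snn[of i x] by simp
      qed
      show "idt x' u"
        by (rule ID_lim[where u=U, OF UZ snn uZ]) (use incx slim sIH UZ u(2) in auto)
    qed
  qed
  with u show ?thesis by blast
qed

lemma idt_all:
  assumes u: "u \<in> Z"
  shows "idt x' u" "integrable (P x') u"
proof -
  define up where "up = (\<lambda>x. max (u x) 0)"
  define um where "um = (\<lambda>x. max (- u x) 0)"
  have m: "up \<in> borel_measurable M" "um \<in> borel_measurable M"
    unfolding up_def um_def using Z_meas[OF u] by measurable
  have upZ: "up \<in> Z" by (rule Z_dom[OF u m(1)]) (auto simp: up_def)
  have umZ: "um \<in> Z" by (rule Z_dom[OF u m(2)]) (auto simp: um_def)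
  have nn: "\<And>x. 0 \<le> up x" "\<And>x. 0 \<le> um x" unfolding up_def um_def by auto
  have ueq: "u = (\<lambda>x. up x + (-1) * um x)" unfolding up_def um_def by (auto simp: fun_eq_iff max_def)
  have ueq2: "u = (\<lambda>x. up x - um x)" unfolding up_def um_def by (auto simp: fun_eq_iff max_def)
  have Su: "S u = S up - S um"
    using S_add[OF upZ Z_scale[OF umZ, of "-1"]] S_scale[OF umZ, of "-1"] ueq by simp
  have i1: "idt y up" "idt y um" for y using idt_nonneg[OF upZ nn(1)] idt_nonneg[OF umZ nn(2)] by auto
  have int: "integrable (P y) up" "integrable (P y) um" for y using fin_Z(2)[OF upZ nn(1)] fin_Z(2)[OF umZ nn(2)] by auto
  show "integrable (P x') u" unfolding ueq2 by (rule Bochner_Integration.integrable_diff[OF int(1)[of x'] int(2)[of x']])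
  have ie: "integral\<^sup>L (P y) u = integral\<^sup>L (P y) up - integral\<^sup>L (P y) um" for y
    by (subst ueq2) (rule Bochner_Integration.integral_diff[OF int(1) int(2)])
  show "idt x' u" using i1[of x'] unfolding idt_def Su ie
    by (simp add: blinfun.diff_right)
qed


lemma nu_lam: "(\<lambda>B. blinfun_apply x' (mT T B)) = nu x'" by (simp add: nu_def)

lemma sm_integral_eq: "sm_integral M R (nu x') A f =
   integral\<^sup>L (P x') (\<lambda>x. indicator A x * f x) - integral\<^sup>L (P (-x')) (\<lambda>x. indicator A x * f x)"
  unfolding sm_integral_def set_lebesgue_integral_def neg_P by simp

lemma Z_L1: assumes u: "u \<in> Z" shows "u \<in> L1vm M R (mT T)"
  unfolding L1vm_def nu_lam
proof (intro CollectI conjI allI ballI)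
  show um: "u \<in> borel_measurable M" by (rule Z_meas[OF u])
  fix x'
  define au where "au = (\<lambda>x. \<bar>u x\<bar>)"
  have auZ: "au \<in> Z" by (rule Z_dom[OF u]) (use um in \<open>auto simp: au_def\<close>)
  have aunn: "\<And>x. 0 \<le> au x" unfolding au_def by simp
  have m: "(\<lambda>x. ennreal (norm (u x))) \<in> borel_measurable M" using um by measurable
  have "(\<integral>\<^sup>+x. ennreal (norm (u x)) \<partial>sm_var M R (nu x')) =
     (\<integral>\<^sup>+x. ennreal (au x) \<partial>P x') + (\<integral>\<^sup>+x. ennreal (au x) \<partial>P (-x'))"
    using nn_V[OF m] unfolding au_def by simp
  also have "\<dots> < \<infinity>" using fin_Z(1)[OF auZ aunn, of x'] fin_Z(1)[OF auZ aunn, of "-x'"] by simp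
  finally show "integrable (sm_var M R (nu x')) u" unfolding integrable_iff_bounded
    using um measurable_cong_sets[OF sets_V refl] by auto
next
  fix A assume A: "A \<in> sets M"
  define w where "w = (\<lambda>x. indicator A x * u x)"
  have wZ: "w \<in> Z" by (rule Z_dom[OF u]) (use Z_meas[OF u] A in \<open>auto simp: w_def indicator_def\<close>)
  show "\<exists>e. \<forall>x'. blinfun_apply x' e = sm_integral M R (nu x') A u"
    by (intro exI[of _ "S w"] allI) (use idt_all(1)[OF wZ] in \<open>simp add: idt_def sm_integral_eq w_def\<close>)
qed

lemma I_Z: assumes u: "u \<in> Z" shows "I_vm M R (mT T) u = S u"
  unfolding I_vm_def vm_integral_def nu_lam
proof (rule the_equality)
  have i: "integrable (P y) u" for y by (rule idt_all(2)[OF u])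
  have e: "sm_integral M R (nu x') (space M) u = integral\<^sup>L (P x') u - integral\<^sup>L (P (-x')) u" for x'
    unfolding sm_integral_def neg_P using set_integral_space[OF i] by simp
  show "\<forall>x'. blinfun_apply x' (S u) = sm_integral M R (nu x') (space M) u"
    using idt_all(1)[OF u] unfolding e idt_def by simp
  then show "\<And>e. \<forall>x'. blinfun_apply x' e = sm_integral M R (nu x') (space M) u \<Longrightarrow> e = S u"
    using hb_sep by metis
qed

lemma null_semivar:
  assumes A: "A \<in> sets \<xi>" "emeasure \<xi> A = 0"
  shows "vm_semivar M R (mT T) A = 0"
proof -
  have As: "A \<in> sets M" using A sx by simp
  have z: "emeasure (P y) A = 0" for y
  proof -
    have "jset.pf R (nu y) A \<le> 0" unfolding jset.pf_def[OF jset_nu]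
    proof (rule SUP_least)
      fix B assume B: "B \<in> {B \<in> R. B \<subseteq> A}"
      have "AE x in \<xi>. indicator B x = (0::real)"
        by (rule AE_I'[of A]) (use A B in \<open>auto simp: null_sets_def indicator_def\<close>)
      then have "S (indicator B) = 0" using S_ae R_Z B by blast
      then show "ennreal (nu y B) \<le> 0" using nu_eq[of B y] B by simp
    qed
    then show ?thesis using emeasure_P[OF As] by simp
  qed
  have ne: "{x'::'b \<Rightarrow>\<^sub>L real. norm x' \<le> 1} \<noteq> {}"
  proof -
    have "(0::'b \<Rightarrow>\<^sub>L real) \<in> {x'. norm x' \<le> 1}" by simp
    then show ?thesis by blast
  qed
  show ?thesis unfolding vm_semivar_def nu_lam emeasure_V[OF As] z
    using SUP_const[OF ne, of "0::ennreal"] by simp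
qed

lemma incl: "incl_into_L1 \<xi> Z M R (mT T)"
  unfolding incl_into_L1_def using null_semivar Z_L1 by blast

lemma L1_props:
  assumes f: "f \<in> L1vm M R (mT T)"
  shows "integrable (P y) f" "blinfun_apply y (I_vm M R (mT T) f) = integral\<^sup>L (P y) f - integral\<^sup>L (P (-y)) f"
proof -
  have fm: "f \<in> borel_measurable M" and iv: "\<And>x'. integrable (sm_var M R (nu x')) f"
    and ex: "\<And>A. A \<in> sets M \<Longrightarrow> \<exists>e. \<forall>x'. blinfun_apply x' e = sm_integral M R (nu x') A f"
    using f unfolding L1vm_def nu_lam by auto
  have m: "(\<lambda>x. ennreal (norm (f x))) \<in> borel_measurable M" using fm by measurable
  have int: "integrable (P x') f" for x'
  proof -
    have "(\<integral>\<^sup>+x. ennreal (norm (f x)) \<partial>sm_var M R (nu x')) < \<infinity>"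
      using iv[of x'] unfolding integrable_iff_bounded by blast
    then have "(\<integral>\<^sup>+x. ennreal (norm (f x)) \<partial>P x') < \<infinity>" using nn_V[OF m, of x'] by simp
    then show ?thesis unfolding integrable_iff_bounded using fm meas_P' by blast
  qed
  then show "integrable (P y) f" .
  have e: "sm_integral M R (nu x') (space M) f = integral\<^sup>L (P x') f - integral\<^sup>L (P (-x')) f" for x'
    unfolding sm_integral_def neg_P using set_integral_space[OF int] by simp
  obtain e0 where e0: "\<forall>x'. blinfun_apply x' e0 = sm_integral M R (nu x') (space M) f"
    using ex[OF sets.top] by blast
  have "I_vm M R (mT T) f = e0" unfolding I_vm_def vm_integral_def nu_lam
  proof (rule the_equality)
    show "\<forall>x'. blinfun_apply x' e0 = sm_integral M R (nu x') (space M) f" by fact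
    show "\<And>e. \<forall>x'. blinfun_apply x' e = sm_integral M R (nu x') (space M) f \<Longrightarrow> e = e0"
      using e0 hb_sep by metis
  qed
  then show "blinfun_apply y (I_vm M R (mT T) f) = integral\<^sup>L (P y) f - integral\<^sup>L (P (-y)) f"
    using e0 e by simp
qed

lemma I_cont:
  assumes f: "f \<in> L1vm M R (mT T)" and g: "g \<in> L1vm M R (mT T)"
    and lt: "L1vm_norm M R (mT T) (\<lambda>x. g x - f x) < ennreal e"
  shows "dist (I_vm M R (mT T) g) (I_vm M R (mT T) f) < e"
proof -
  define w where "w = I_vm M R (mT T) g - I_vm M R (mT T) f"
  obtain y :: "'b \<Rightarrow>\<^sub>L real" where y: "norm y \<le> 1" "blinfun_apply y w = norm w"
    using hahn_banach_norming by blast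
  define h where "h = (\<lambda>x. g x - f x)"
  have ih: "integrable (P z) h" "integrable (P z) (\<lambda>x. \<bar>h x\<bar>)" for z
    unfolding h_def using L1_props(1)[OF f] L1_props(1)[OF g] by auto
  have "norm w = blinfun_apply y (I_vm M R (mT T) g) - blinfun_apply y (I_vm M R (mT T) f)"
    using y(2) unfolding w_def by (simp add: blinfun.diff_right)
  also have "\<dots> = integral\<^sup>L (P y) h - integral\<^sup>L (P (-y)) h"
    unfolding L1_props(2)[OF f] L1_props(2)[OF g] h_def
    using L1_props(1)[OF f] L1_props(1)[OF g] by simp
  also have "\<dots> \<le> (\<integral>x. \<bar>h x\<bar> \<partial>P y) + (\<integral>x. \<bar>h x\<bar> \<partial>P (-y))"
  proof -
    have "\<bar>integral\<^sup>L (P z) h\<bar> \<le> (\<integral>x. \<bar>h x\<bar> \<partial>P z)" for z using integral_norm_bound[of "P z" h] by simp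
    from this[of y] this[of "-y"] show ?thesis by linarith
  qed
  finally have n1: "norm w \<le> (\<integral>x. \<bar>h x\<bar> \<partial>P y) + (\<integral>x. \<bar>h x\<bar> \<partial>P (-y))" .
  have "f \<in> borel_measurable M" "g \<in> borel_measurable M" using f g unfolding L1vm_def by auto
  then have hm: "h \<in> borel_measurable M" unfolding h_def by measurable
  have m: "(\<lambda>x. ennreal \<bar>h x\<bar>) \<in> borel_measurable M" using hm by measurable
  have nn: "ennreal (\<integral>x. \<bar>h x\<bar> \<partial>P z) = (\<integral>\<^sup>+x. ennreal \<bar>h x\<bar> \<partial>P z)" for z
    by (rule nn_integral_eq_integral[symmetric]) (use ih in auto)
  have "ennreal (norm w) \<le> ennreal ((\<integral>x. \<bar>h x\<bar> \<partial>P y) + (\<integral>x. \<bar>h x\<bar> \<partial>P (-y)))" using n1 by (rule ennreal_leI)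
  also have "\<dots> = (\<integral>\<^sup>+x. ennreal \<bar>h x\<bar> \<partial>P y) + (\<integral>\<^sup>+x. ennreal \<bar>h x\<bar> \<partial>P (-y))"
    by (simp add: nn[symmetric] ennreal_plus[symmetric] del: ennreal_plus)
  also have "\<dots> = (\<integral>\<^sup>+x. ennreal \<bar>h x\<bar> \<partial>sm_var M R (nu y))" using nn_V[OF m] by simp
  also have "\<dots> \<le> L1vm_norm M R (mT T) h" unfolding L1vm_norm_def nu_lam
    by (rule SUP_upper) (use y(1) in simp)
  also have "\<dots> < ennreal e" using lt unfolding h_def .
  finally have "norm w < e" by (simp add: ennreal_less_iff)
  then show ?thesis unfolding w_def by (simp add: dist_norm)
qed

end


theorem theorem5p1:
  fixes M :: "'a measure" and X :: "('a \<Rightarrow> real) set" and nX :: "('a \<Rightarrow> real) \<Rightarrow> real"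
    and T :: "('a \<Rightarrow> real) \<Rightarrow> 'b::banach"
  assumes "qbfs M X nX" and "sigma_order_cont M X nX" and "sigma_property M X"
    and "cont_lin_op X nX T"
  shows "incl_into_L1 M X M (SigmaX M X) (mT T)
    \<and> (\<forall>f\<in>X. T f = I_vm M (SigmaX M X) (mT T) f)
    \<and> (\<forall>f\<in>L1vm M (SigmaX M X) (mT T). \<forall>e>0. \<exists>d>0. \<forall>g\<in>L1vm M (SigmaX M X) (mT T).
          L1vm_norm M (SigmaX M X) (mT T) (\<lambda>x. g x - f x) < ennreal d \<longrightarrow>
          dist (I_vm M (SigmaX M X) (mT T) g) (I_vm M (SigmaX M X) (mT T) f) < e)
    \<and> (\<forall>(\<xi>::'a measure) (Z::('a \<Rightarrow> real) set) nZ (S::('a \<Rightarrow> real) \<Rightarrow> 'b).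
          sets \<xi> = sets M \<and> absolutely_continuous M \<xi> \<and> qbfs \<xi> Z nZ \<and> sigma_order_cont \<xi> Z nZ
          \<and> X \<subseteq> Z \<and> cont_lin_op Z nZ S \<and> (\<forall>f\<in>X. T f = S f)
          \<longrightarrow> incl_into_L1 \<xi> Z M (SigmaX M X) (mT T)
              \<and> (\<forall>f\<in>Z. S f = I_vm M (SigmaX M X) (mT T) f))"
proof -
  have qX: "ideal_fs M X" using assms(1) unfolding qbfs_def by blast
  interpret m1: ms M X T M X nX T
    by unfold_locales (use assms qX in auto)
  have c1: "incl_into_L1 M X M (SigmaX M X) (mT T)" by (rule m1.incl)
  have c2: "\<forall>f\<in>X. T f = I_vm M (SigmaX M X) (mT T) f" using m1.I_Z by simp
  have c3: "\<forall>f\<in>L1vm M (SigmaX M X) (mT T). \<forall>e>0. \<exists>d>0. \<forall>g\<in>L1vm M (SigmaX M X) (mT T).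
          L1vm_norm M (SigmaX M X) (mT T) (\<lambda>x. g x - f x) < ennreal d \<longrightarrow>
          dist (I_vm M (SigmaX M X) (mT T) g) (I_vm M (SigmaX M X) (mT T) f) < e"
    using m1.I_cont by blast
  have c4: "\<forall>(\<xi>::'a measure) (Z::('a \<Rightarrow> real) set) nZ (S::('a \<Rightarrow> real) \<Rightarrow> 'b).
          sets \<xi> = sets M \<and> absolutely_continuous M \<xi> \<and> qbfs \<xi> Z nZ \<and> sigma_order_cont \<xi> Z nZ
          \<and> X \<subseteq> Z \<and> cont_lin_op Z nZ S \<and> (\<forall>f\<in>X. T f = S f)
          \<longrightarrow> incl_into_L1 \<xi> Z M (SigmaX M X) (mT T)
              \<and> (\<forall>f\<in>Z. S f = I_vm M (SigmaX M X) (mT T) f)"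
  proof (intro allI impI)
    fix \<xi> :: "'a measure" and Z :: "('a \<Rightarrow> real) set" and nZ and S :: "('a \<Rightarrow> real) \<Rightarrow> 'b"
    assume h: "sets \<xi> = sets M \<and> absolutely_continuous M \<xi> \<and> qbfs \<xi> Z nZ \<and> sigma_order_cont \<xi> Z nZ
          \<and> X \<subseteq> Z \<and> cont_lin_op Z nZ S \<and> (\<forall>f\<in>X. T f = S f)"
    interpret m2: ms M X T \<xi> Z nZ S
      by unfold_locales (use h assms qX in auto)
    show "incl_into_L1 \<xi> Z M (SigmaX M X) (mT T) \<and> (\<forall>f\<in>Z. S f = I_vm M (SigmaX M X) (mT T) f)"
      using m2.incl m2.I_Z by simp
  qed
  show ?thesis using c1 c2 c3 c4 by blast
qed

end
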